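(* Let $\Bbbk$ be a field, $A$ a $\Bbbk$-algebra, $\Gamma$ a subalgebra, and $\sim$ an equivalence relation on $\mathrm{cfs}(\Gamma)$ such that $\Gamma$ is a strong Harish-Chandra block subalgebra of $A$ with respect to $\sim$. Let $B\in\mathrm{cfs}(\Gamma)/{\sim}$. Suppose $B$ is finite, $\Gamma$ is noetherian, and $\mathcal A(B,B)$ is finitely generated as a left and as a right $\hat\Gamma_B$-module. Then: (i) there are finitely many isomorphism classes of simple Harish-Chandra block modules $V$ with $B\in\mathrm{Supp}(V)$; (ii) if $V$ is a simple Harish-Chandra block module, then $V(B)$ is finite-dimensional.
   Context: All algebras are associative unital $\Bbbk$-algebras. $\mathrm{cfs}(\Gamma)$ is the set of maximal two-sided ideals $\mathfrak m$ with $\dim\Gamma/\mathfrak m<\infty$. For a class $B$, $\mathcal W(B)=\{\mathfrak m_1\cdots\mathfrak m_k:k\ge0,\ \mathfrak m_i\in B\}$. For a left $\Gamma$-module $V$, $V(B)=\{v:\mathfrak mv=0$ for some $\mathfrak m\in\mathcal W(B)\}$ (analogously for right modules); $V$ is a block module if $V=\bigoplus_BV(B)$, $\mathrm{Supp}(V)=\{B:V(B)\ne0\}$, and a strong block module if also each $V(B)$ is killed by some $\mathfrak m\in\mathcal W(B)$. A Harish-Chandra block module is an $A$-module that is a block module over $\Gamma$. $\Gamma$ is a strong Harish-Chandra block subalgebra of $A$ if for all $B$ and $\mathfrak m\in\mathcal W(B)$, the left $A$-module $A/A\mathfrak m$ and the right module $A/\mathfrak mA$ are strong block modules over $\Gamma$.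 $\hat\Gamma_B=\varprojlim_{\mathfrak m\in\mathcal W(B)}\Gamma/\mathfrak m$ and $\mathcal A(B,B)=\varprojlim_{\mathfrak n,\mathfrak m\in\mathcal W(B)}A/(\mathfrak nA+A\mathfrak m)$, which is a $(\hat\Gamma_B,\hat\Gamma_B)$-bimodule via the natural actions of $\Gamma/\mathfrak n$ on the left and $\Gamma/\mathfrak m$ on the right of $A/(\mathfrak nA+A\mathfrak m)$. *)

theory Defs
  imports Main
begin

text \<open>The algebra A is the whole type 'a (a unital ring), with scalar multiplication
  sc by the field 'k.\<close>

definition k_algebra :: "('k::field \<Rightarrow> 'a::ring_1 \<Rightarrow> 'a) \<Rightarrow> bool" where
  "k_algebra sc \<longleftrightarrow>
     (\<forall>c x y. sc c (x + y) = sc c x + sc c y) \<and>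
     (\<forall>c d x. sc (c + d) x = sc c x + sc d x) \<and>
     (\<forall>c d x. sc (c * d) x = sc c (sc d x)) \<and>
     (\<forall>x. sc 1 x = x) \<and>
     (\<forall>c x y. sc c (x * y) = sc c x * y \<and> sc c (x * y) = x * sc c y)"

definition subalgebra :: "('k::field \<Rightarrow> 'a::ring_1 \<Rightarrow> 'a) \<Rightarrow> 'a set \<Rightarrow> bool" where
  "subalgebra sc G \<longleftrightarrow> 0 \<in> G \<and> 1 \<in> G \<and>
     (\<forall>x\<in>G. \<forall>y\<in>G. x + y \<in> G \<and> x * y \<in> G) \<and> (\<forall>c. \<forall>x\<in>G. sc c x \<in> G)"

inductive_set addcl :: "'a::monoid_add set \<Rightarrow> 'a set" for S where
  addcl_zero: "0 \<in> addcl S"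
| addcl_add: "x \<in> S \<Longrightarrow> y \<in> addcl S \<Longrightarrow> x + y \<in> addcl S"

definition tsideal :: "'a::ring_1 set \<Rightarrow> 'a set \<Rightarrow> bool" where
  "tsideal G I \<longleftrightarrow> I \<subseteq> G \<and> 0 \<in> I \<and> (\<forall>x\<in>I. \<forall>y\<in>I. x + y \<in> I) \<and> (\<forall>x\<in>I. - x \<in> I) \<and>
     (\<forall>g\<in>G. \<forall>x\<in>I. g * x \<in> I \<and> x * g \<in> I)"

definition left_ideal :: "'a::ring_1 set \<Rightarrow> 'a set \<Rightarrow> bool" where
  "left_ideal G I \<longleftrightarrow> I \<subseteq> G \<and> 0 \<in> I \<and> (\<forall>x\<in>I. \<forall>y\<in>I. x + y \<in> I) \<and> (\<forall>x\<in>I. - x \<in> I) \<and>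
     (\<forall>g\<in>G. \<forall>x\<in>I. g * x \<in> I)"

definition right_ideal :: "'a::ring_1 set \<Rightarrow> 'a set \<Rightarrow> bool" where
  "right_ideal G I \<longleftrightarrow> I \<subseteq> G \<and> 0 \<in> I \<and> (\<forall>x\<in>I. \<forall>y\<in>I. x + y \<in> I) \<and> (\<forall>x\<in>I. - x \<in> I) \<and>
     (\<forall>g\<in>G. \<forall>x\<in>I. x * g \<in> I)"

definition noetherian :: "'a::ring_1 set \<Rightarrow> bool" where
  "noetherian G \<longleftrightarrow>
     (\<forall>I :: nat \<Rightarrow> 'a set. (\<forall>n. left_ideal G (I n) \<and> I n \<subseteq> I (Suc n)) \<longrightarrow> (\<exists>N. \<forall>n\<ge>N. I n = I N)) \<and>
     (\<forall>I :: nat \<Rightarrow> 'a set. (\<forall>n. right_ideal G (I n) \<and> I n \<subseteq> I (Suc n)) \<longrightarrow> (\<exists>N. \<forall>n\<ge>N. I n = I N))"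

definition max_ideal :: "'a::ring_1 set \<Rightarrow> 'a set \<Rightarrow> bool" where
  "max_ideal G m \<longleftrightarrow> tsideal G m \<and> m \<noteq> G \<and> (\<forall>J. tsideal G J \<and> m \<subseteq> J \<and> J \<noteq> G \<longrightarrow> J = m)"

definition fin_codim :: "('k::field \<Rightarrow> 'a::ring_1 \<Rightarrow> 'a) \<Rightarrow> 'a set \<Rightarrow> 'a set \<Rightarrow> bool" where
  "fin_codim sc G m \<longleftrightarrow> (\<exists>S. finite S \<and> S \<subseteq> G \<and> (\<forall>x\<in>G. \<exists>c. x - (\<Sum>s\<in>S. sc (c s) s) \<in> m))"

definition cfs :: "('k::field \<Rightarrow> 'a::ring_1 \<Rightarrow> 'a) \<Rightarrow> 'a set \<Rightarrow> 'a set set" where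
  "cfs sc G = {m. max_ideal G m \<and> fin_codim sc G m}"

definition ideal_mult :: "'a::ring_1 set \<Rightarrow> 'a set \<Rightarrow> 'a set" where
  "ideal_mult I J = addcl {a * b | a b. a \<in> I \<and> b \<in> J}"

fun ideal_prod :: "'a::ring_1 set \<Rightarrow> 'a set list \<Rightarrow> 'a set" where
  "ideal_prod G [] = G"
| "ideal_prod G (m # ms) = ideal_mult m (ideal_prod G ms)"

text \<open>W(B): all finite products of ideals from B (empty product = G).\<close>
definition Wset :: "'a::ring_1 set \<Rightarrow> 'a set set \<Rightarrow> 'a set set" where
  "Wset G Bk = {ideal_prod G ms | ms. set ms \<subseteq> Bk}"

text \<open>Generic: the module is M/N where M is a subset of an abelian group type 'm and N a
  submodule; act x v is the action of x. Actual modules are the case N = {0}.\<close>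

definition vsub :: "'a::ring_1 set \<Rightarrow> 'm::ab_group_add set \<Rightarrow> 'm set \<Rightarrow> ('a \<Rightarrow> 'm \<Rightarrow> 'm) \<Rightarrow> 'a set set \<Rightarrow> 'm set" where
  "vsub G M N act Bk = {v \<in> M. \<exists>m\<in>Wset G Bk. \<forall>x\<in>m. act x v \<in> N}"

definition blocks :: "('k::field \<Rightarrow> 'a::ring_1 \<Rightarrow> 'a) \<Rightarrow> 'a set \<Rightarrow> ('a set \<times> 'a set) set \<Rightarrow> 'a set set set" where
  "blocks sc G R = cfs sc G // R"

definition block_family :: "('k::field \<Rightarrow> 'a::ring_1 \<Rightarrow> 'a) \<Rightarrow> 'a set \<Rightarrow> ('a set \<times> 'a set) set \<Rightarrow>
    'm::ab_group_add set \<Rightarrow> 'm set \<Rightarrow> ('a \<Rightarrow> 'm \<Rightarrow> 'm) \<Rightarrow> ('a set set \<Rightarrow> 'm) \<Rightarrow> bool" where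
  "block_family sc G R M N act f \<longleftrightarrow> finite {Bk. f Bk \<noteq> 0} \<and>
     (\<forall>Bk. f Bk \<noteq> 0 \<longrightarrow> Bk \<in> blocks sc G R \<and> f Bk \<in> vsub G M N act Bk)"

text \<open>M/N is the direct sum of the (M/N)(B), B ranging over the blocks.\<close>
definition block_mod :: "('k::field \<Rightarrow> 'a::ring_1 \<Rightarrow> 'a) \<Rightarrow> 'a set \<Rightarrow> ('a set \<times> 'a set) set \<Rightarrow>
    'm::ab_group_add set \<Rightarrow> 'm set \<Rightarrow> ('a \<Rightarrow> 'm \<Rightarrow> 'm) \<Rightarrow> bool" where
  "block_mod sc G R M N act \<longleftrightarrow>
     (\<forall>v\<in>M. \<exists>f. block_family sc G R M N act f \<and> v - (\<Sum>Bk\<in>{Bk. f Bk \<noteq> 0}. f Bk) \<in> N) \<and>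
     (\<forall>f. block_family sc G R M N act f \<and> (\<Sum>Bk\<in>{Bk. f Bk \<noteq> 0}. f Bk) \<in> N \<longrightarrow> (\<forall>Bk. f Bk \<in> N))"

definition strong_block_mod :: "('k::field \<Rightarrow> 'a::ring_1 \<Rightarrow> 'a) \<Rightarrow> 'a set \<Rightarrow> ('a set \<times> 'a set) set \<Rightarrow>
    'm::ab_group_add set \<Rightarrow> 'm set \<Rightarrow> ('a \<Rightarrow> 'm \<Rightarrow> 'm) \<Rightarrow> bool" where
  "strong_block_mod sc G R M N act \<longleftrightarrow> block_mod sc G R M N act \<and>
     (\<forall>Bk\<in>blocks sc G R. \<exists>m\<in>Wset G Bk. \<forall>x\<in>m. \<forall>v\<in>vsub G M N act Bk. act x v \<in> N)"

definition supp :: "('k::field \<Rightarrow> 'a::ring_1 \<Rightarrow> 'a) \<Rightarrow> 'a set \<Rightarrow> ('a set \<times> 'a set) set \<Rightarrow>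
    'm::ab_group_add set \<Rightarrow> 'm set \<Rightarrow> ('a \<Rightarrow> 'm \<Rightarrow> 'm) \<Rightarrow> 'a set set set" where
  "supp sc G R M N act = {Bk \<in> blocks sc G R. \<not> vsub G M N act Bk \<subseteq> N}"

text \<open>Gamma is a strong Harish-Chandra block subalgebra of A (= UNIV):
  A/Am (left, via left multiplication) and A/mA (right, via right multiplication)
  are strong block modules over Gamma.\<close>
definition strong_HC_block_subalg :: "('k::field \<Rightarrow> 'a::ring_1 \<Rightarrow> 'a) \<Rightarrow> 'a set \<Rightarrow> ('a set \<times> 'a set) set \<Rightarrow> bool" where
  "strong_HC_block_subalg sc G R \<longleftrightarrow>
     (\<forall>Bk\<in>blocks sc G R. \<forall>m\<in>Wset G Bk.
        strong_block_mod sc G R (UNIV :: 'a set) (addcl {a * x | a x. x \<in> m}) (\<lambda>x v. x * v) \<and>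
        strong_block_mod sc G R (UNIV :: 'a set) (addcl {x * a | x a. x \<in> m}) (\<lambda>x v. v * x))"

definition amod :: "'m::ab_group_add set \<Rightarrow> ('a::ring_1 \<Rightarrow> 'm \<Rightarrow> 'm) \<Rightarrow> bool" where
  "amod M act \<longleftrightarrow> 0 \<in> M \<and> (\<forall>v\<in>M. \<forall>w\<in>M. v + w \<in> M) \<and> (\<forall>v\<in>M. - v \<in> M) \<and>
     (\<forall>a. \<forall>v\<in>M. act a v \<in> M) \<and>
     (\<forall>a. \<forall>v\<in>M. \<forall>w\<in>M. act a (v + w) = act a v + act a w) \<and>
     (\<forall>a b. \<forall>v\<in>M. act (a + b) v = act a v + act b v) \<and>
     (\<forall>a b. \<forall>v\<in>M. act (a * b) v = act a (act b v)) \<and>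
     (\<forall>v\<in>M. act 1 v = v)"

definition simple_amod :: "'m::ab_group_add set \<Rightarrow> ('a::ring_1 \<Rightarrow> 'm \<Rightarrow> 'm) \<Rightarrow> bool" where
  "simple_amod M act \<longleftrightarrow> amod M act \<and> M \<noteq> {0} \<and>
     (\<forall>N. N \<subseteq> M \<and> 0 \<in> N \<and> (\<forall>v\<in>N. \<forall>w\<in>N. v + w \<in> N) \<and> (\<forall>v\<in>N. - v \<in> N) \<and>
          (\<forall>a. \<forall>v\<in>N. act a v \<in> N) \<longrightarrow> N = {0} \<or> N = M)"

definition amod_iso :: "'m::ab_group_add set \<Rightarrow> ('a::ring_1 \<Rightarrow> 'm \<Rightarrow> 'm) \<Rightarrow> 'm set \<Rightarrow> ('a \<Rightarrow> 'm \<Rightarrow> 'm) \<Rightarrow> bool" where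
  "amod_iso M act M' act' \<longleftrightarrow> (\<exists>f. bij_betw f M M' \<and>
     (\<forall>v\<in>M. \<forall>w\<in>M. f (v + w) = f v + f w) \<and> (\<forall>a. \<forall>v\<in>M. f (act a v) = act' a (f v)))"

definition hc_block_mod :: "('k::field \<Rightarrow> 'a::ring_1 \<Rightarrow> 'a) \<Rightarrow> 'a set \<Rightarrow> ('a set \<times> 'a set) set \<Rightarrow>
    'm::ab_group_add set \<Rightarrow> ('a \<Rightarrow> 'm \<Rightarrow> 'm) \<Rightarrow> bool" where
  "hc_block_mod sc G R M act \<longleftrightarrow> amod M act \<and> block_mod sc G R M {0} act"

text \<open>Finite-dimensionality over the field of a subset S of an A-module (field acting via sc c 1).\<close>
definition fin_dim :: "('k::field \<Rightarrow> 'a::ring_1 \<Rightarrow> 'a) \<Rightarrow> ('a \<Rightarrow> 'm::ab_group_add \<Rightarrow> 'm) \<Rightarrow> 'm set \<Rightarrow> bool" where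
  "fin_dim sc act S \<longleftrightarrow> (\<exists>T. finite T \<and> T \<subseteq> S \<and> (\<forall>v\<in>S. \<exists>c. v = (\<Sum>t\<in>T. act (sc (c t) 1) t)))"

text \<open>hat Gamma_B = lim Gamma/m over m in W(B); an element is represented by a family
  x m in Gamma with x m - x m' in m' whenever m is contained in m'.\<close>
definition gamma_hat :: "'a::ring_1 set \<Rightarrow> 'a set set \<Rightarrow> ('a set \<Rightarrow> 'a) set" where
  "gamma_hat G Bk = {x. (\<forall>m\<in>Wset G Bk. x m \<in> G) \<and>
     (\<forall>m\<in>Wset G Bk. \<forall>m'\<in>Wset G Bk. m \<subseteq> m' \<longrightarrow> x m - x m' \<in> m')}"

definition two_sided_denom :: "'a::ring_1 set \<Rightarrow> 'a set \<Rightarrow> 'a set" where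
  "two_sided_denom n m = addcl ({x * a | x a. x \<in> n} \<union> {a * y | a y. y \<in> m})"

text \<open>A(B,B) = lim A/(nA + Am) over n, m in W(B).\<close>
definition a_hat :: "'a::ring_1 set \<Rightarrow> 'a set set \<Rightarrow> ('a set \<times> 'a set \<Rightarrow> 'a) set" where
  "a_hat G Bk = {y. \<forall>n\<in>Wset G Bk. \<forall>m\<in>Wset G Bk. \<forall>n'\<in>Wset G Bk. \<forall>m'\<in>Wset G Bk.
     n \<subseteq> n' \<and> m \<subseteq> m' \<longrightarrow> y (n, m) - y (n', m') \<in> two_sided_denom n' m'}"

text \<open>A(B,B) finitely generated as a left hat Gamma_B-module
  (left action: (x.y)(n,m) = x n * y(n,m)); equality in A(B,B) is componentwise modulo nA+Am.\<close>
definition a_hat_fg_left :: "'a::ring_1 set \<Rightarrow> 'a set set \<Rightarrow> bool" where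
  "a_hat_fg_left G Bk \<longleftrightarrow> (\<exists>Gs. finite Gs \<and> Gs \<subseteq> a_hat G Bk \<and>
     (\<forall>y\<in>a_hat G Bk. \<exists>c. (\<forall>g\<in>Gs. c g \<in> gamma_hat G Bk) \<and>
        (\<forall>n\<in>Wset G Bk. \<forall>m\<in>Wset G Bk. y (n, m) - (\<Sum>g\<in>Gs. c g n * g (n, m)) \<in> two_sided_denom n m)))"

text \<open>Right action: (y.x)(n,m) = y(n,m) * x m.\<close>
definition a_hat_fg_right :: "'a::ring_1 set \<Rightarrow> 'a set set \<Rightarrow> bool" where
  "a_hat_fg_right G Bk \<longleftrightarrow> (\<exists>Gs. finite Gs \<and> Gs \<subseteq> a_hat G Bk \<and>
     (\<forall>y\<in>a_hat G Bk. \<exists>c. (\<forall>g\<in>Gs. c g \<in> gamma_hat G Bk) \<and>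
        (\<forall>n\<in>Wset G Bk. \<forall>m\<in>Wset G Bk. y (n, m) - (\<Sum>g\<in>Gs. g (n, m) * c g m) \<in> two_sided_denom n m)))"

end

theory Submission
  imports Defs "HOL.Vector_Spaces"
begin

lemma addcl_sub: "x \<in> addcl S \<Longrightarrow> S \<subseteq> T \<Longrightarrow> x \<in> addcl T"
  by (induction rule: addcl.induct) (auto intro: addcl.intros)

lemma addcl_base: "x \<in> S \<Longrightarrow> (x::'a::monoid_add) \<in> addcl S"
  by (metis add_0_right addcl.addcl_add addcl.addcl_zero)

lemma addcl_plus: "x \<in> addcl S \<Longrightarrow> y \<in> addcl S \<Longrightarrow> x + y \<in> addcl S"
  by (induction rule: addcl.induct) (auto simp: add.assoc intro: addcl.intros)

lemma addcl_sum: "finite I \<Longrightarrow> (\<And>i. i \<in> I \<Longrightarrow> f i \<in> addcl S) \<Longrightarrow> sum f I \<in> addcl S"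
  by (induction rule: finite_induct) (auto intro: addcl.intros addcl_plus)

lemma addcl_neg: "x \<in> addcl S \<Longrightarrow> (\<And>y. y \<in> S \<Longrightarrow> - y \<in> S) \<Longrightarrow> - (x::'a::ab_group_add) \<in> addcl S"
proof (induction rule: addcl.induct)
  case addcl_zero then show ?case by (simp add: addcl.addcl_zero)
next
  case (addcl_add x y)
  then have "- x + - y \<in> addcl S" by (intro addcl.addcl_add) auto
  then show ?case by (simp add: add.commute)
qed

lemma addcl_hom: "x \<in> addcl S \<Longrightarrow> (\<And>a b. h (a + b) = h a + h b) \<Longrightarrow> h 0 = 0 \<Longrightarrow> (\<And>y. y \<in> S \<Longrightarrow> h y \<in> T)
   \<Longrightarrow> h x \<in> addcl T"
  by (induction rule: addcl.induct) (auto intro: addcl.intros)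

lemma addcl_un: "x \<in> addcl (S \<union> T) \<Longrightarrow> \<exists>y z. y \<in> addcl S \<and> z \<in> addcl T \<and> x = y + (z::'a::comm_monoid_add)"
proof (induction rule: addcl.induct)
  case addcl_zero then show ?case by (metis add_0_right addcl.addcl_zero)
next
  case (addcl_add x y)
  then obtain a b where ab: "a \<in> addcl S" "b \<in> addcl T" "y = a + b" by blast
  show ?case
  proof (cases "x \<in> S")
    case True
    have "x + a \<in> addcl S" using True ab by (auto intro: addcl.intros)
    then show ?thesis using ab apply - apply (rule exI[of _ "x + a"], rule exI[of _ b]) by (auto simp: add.assoc)
  next
    case False
    then have "x \<in> T" using addcl_add by auto
    have "x + b \<in> addcl T" using \<open>x \<in> T\<close> ab by (auto intro: addcl.intros)
    then show ?thesis using ab apply - apply (rule exI[of _ a], rule exI[of _ "x + b"]) by (auto simp: ac_simps)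
  qed
qed

lemma addcl_closed: "x \<in> addcl S \<Longrightarrow> 0 \<in> T \<Longrightarrow> S \<subseteq> T \<Longrightarrow> (\<forall>a\<in>T. \<forall>b\<in>T. a + b \<in> T) \<Longrightarrow> x \<in> T"
  by (induction rule: addcl.induct) auto

locale base =
  fixes sc :: "'k::field \<Rightarrow> 'a::ring_1 \<Rightarrow> 'a" and G :: "'a set" and R :: "('a set \<times> 'a set) set"
  assumes kalg: "k_algebra sc" and sub: "subalgebra sc G" and eqv: "equiv (cfs sc G) R"
begin

lemma sc_add: "sc c (x + y) = sc c x + sc c y" and sc_addl: "sc (c + d) x = sc c x + sc d x"
  and sc_mult: "sc (c * d) x = sc c (sc d x)" and sc_one: "sc 1 x = x"
  and sc_ml: "sc c (x * y) = sc c x * y" and sc_mr: "sc c (x * y) = x * sc c y"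
  using kalg unfolding k_algebra_def by blast+

sublocale vs: vector_space sc
  by unfold_locales (auto simp: sc_add sc_addl sc_mult sc_one)

lemma sc_as_mult: "sc c x = sc c 1 * x"
  using sc_ml[of c 1 x] by simp

lemma sc_central: "sc c 1 * x = x * sc c 1"
  using sc_ml[of c 1 x] sc_mr[of c x 1] by simp

lemma G0: "0 \<in> G" and G1: "1 \<in> G" and Gadd: "x \<in> G \<Longrightarrow> y \<in> G \<Longrightarrow> x + y \<in> G"
  and Gmult: "x \<in> G \<Longrightarrow> y \<in> G \<Longrightarrow> x * y \<in> G" and Gsc: "x \<in> G \<Longrightarrow> sc c x \<in> G"
  using sub unfolding subalgebra_def by auto

lemma Gsc1: "sc c 1 \<in> G" using Gsc G1 by auto

lemma Gneg: "x \<in> G \<Longrightarrow> - x \<in> G"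
  using Gsc[of x "-1"] by simp

lemma Gdiff: "x \<in> G \<Longrightarrow> y \<in> G \<Longrightarrow> x - y \<in> G"
  using Gadd Gneg by (metis diff_conv_add_uminus)

lemma Gsum: "finite I \<Longrightarrow> (\<And>i. i \<in> I \<Longrightarrow> f i \<in> G) \<Longrightarrow> sum f I \<in> G"
  by (induction rule: finite_induct) (auto simp: G0 Gadd)


lemma tsG: "tsideal G G"
  unfolding tsideal_def by (auto simp: G0 Gadd Gneg Gmult)

lemma ts_simp: assumes "tsideal G I"
  shows "I \<subseteq> G" "0 \<in> I" "x \<in> I \<Longrightarrow> y \<in> I \<Longrightarrow> x + y \<in> I" "x \<in> I \<Longrightarrow> - x \<in> I"
    "g \<in> G \<Longrightarrow> x \<in> I \<Longrightarrow> g * x \<in> I" "g \<in> G \<Longrightarrow> x \<in> I \<Longrightarrow> x * g \<in> I"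
  using assms unfolding tsideal_def by auto

lemma ts_diff: "tsideal G I \<Longrightarrow> x \<in> I \<Longrightarrow> y \<in> I \<Longrightarrow> x - y \<in> I"
  using ts_simp(3,4) by (metis diff_conv_add_uminus)

lemma ts_sum: "finite S \<Longrightarrow> tsideal G I \<Longrightarrow> (\<And>i. i \<in> S \<Longrightarrow> f i \<in> I) \<Longrightarrow> sum f S \<in> I"
  by (induction S rule: finite_induct) (auto intro: ts_simp)

lemma tsideal_mult: assumes I: "tsideal G I" and J: "tsideal G J"
  shows "tsideal G (ideal_mult I J)"
proof -
  let ?X = "{a * b | a b. a \<in> I \<and> b \<in> J}"
  have XG: "?X \<subseteq> G" using ts_simp(1)[OF I] ts_simp(1)[OF J] Gmult by blast
  show ?thesis unfolding tsideal_def ideal_mult_def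
  proof (intro conjI ballI)
    show "addcl ?X \<subseteq> G" using XG addcl_closed[of _ ?X G] G0 Gadd by blast
    show "0 \<in> addcl ?X" by (rule addcl.addcl_zero)
    show "x + y \<in> addcl ?X" if "x \<in> addcl ?X" "y \<in> addcl ?X" for x y using that addcl_plus by blast
    show "- x \<in> addcl ?X" if "x \<in> addcl ?X" for x
      using that
    proof (rule addcl_neg)
      fix y assume "y \<in> ?X"
      then obtain a b where ab: "a \<in> I" "b \<in> J" "y = a * b" by blast
      then have "- y = (- a) * b" by simp
      then show "- y \<in> ?X" using ab ts_simp(4)[OF I ab(1)] by blast
    qed
    fix g x assume g: "g \<in> G" and x: "x \<in> addcl ?X"
    show "g * x \<in> addcl ?X" using x
    proof (induction rule: addcl.induct)
      case addcl_zero then show ?case by (simp add: addcl.addcl_zero)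
    next
      case (addcl_add u y)
      then obtain a b where ab: "a \<in> I" "b \<in> J" "u = a * b" by blast
      have "g * u = (g * a) * b" using ab by (simp add: mult.assoc)
      moreover have "g * a \<in> I" using ts_simp(5)[OF I g ab(1)] .
      ultimately have "g * u \<in> ?X" using ab by blast
      then show ?case using addcl_add by (simp add: distrib_left addcl.addcl_add)
    qed
    show "x * g \<in> addcl ?X" using x
    proof (induction rule: addcl.induct)
      case addcl_zero then show ?case by (simp add: addcl.addcl_zero)
    next
      case (addcl_add u y)
      then obtain a b where ab: "a \<in> I" "b \<in> J" "u = a * b" by blast
      have "u * g = a * (b * g)" using ab by (simp add: mult.assoc)
      moreover have "b * g \<in> J" using ts_simp(6)[OF J g ab(2)] .
      ultimately have "u * g \<in> ?X" using ab by blast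
      then show ?case using addcl_add by (simp add: distrib_right addcl.addcl_add)
    qed
  qed
qed

lemma im_sub_left: assumes I: "tsideal G I" and J: "J \<subseteq> G" shows "ideal_mult I J \<subseteq> I"
proof
  fix x assume x: "x \<in> ideal_mult I J"
  have "{a * b | a b. a \<in> I \<and> b \<in> J} \<subseteq> I" using ts_simp(6)[OF I] J by blast
  then show "x \<in> I" using x addcl_closed[of x _ I] ts_simp(2,3)[OF I] unfolding ideal_mult_def by blast
qed

lemma im_sub_right: assumes I: "I \<subseteq> G" and J: "tsideal G J" shows "ideal_mult I J \<subseteq> J"
proof
  fix x assume x: "x \<in> ideal_mult I J"
  have "{a * b | a b. a \<in> I \<and> b \<in> J} \<subseteq> J" using ts_simp(5)[OF J] I by blast
  then show "x \<in> J" using x addcl_closed[of x _ J] ts_simp(2,3)[OF J] unfolding ideal_mult_def by blast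
qed

lemma im_mono: "J \<subseteq> J' \<Longrightarrow> ideal_mult I J \<subseteq> ideal_mult I J'"
  unfolding ideal_mult_def by (rule subsetI, erule addcl_sub) blast

lemma im_base: "a \<in> I \<Longrightarrow> b \<in> J \<Longrightarrow> a * b \<in> ideal_mult I J"
  unfolding ideal_mult_def by (rule addcl_base) auto

lemma prod_ts: "(\<And>I. I \<in> set ms \<Longrightarrow> tsideal G I) \<Longrightarrow> tsideal G (ideal_prod G ms)"
  by (induction ms) (auto simp: tsG tsideal_mult)

lemma cfs_ts: "m \<in> cfs sc G \<Longrightarrow> tsideal G m"
  unfolding cfs_def max_ideal_def by auto

lemma blocks_sub: "Bk \<in> blocks sc G R \<Longrightarrow> Bk \<subseteq> cfs sc G"
  unfolding blocks_def by (rule in_quotient_imp_subset[OF eqv])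

lemma W_ts: assumes "Bk \<subseteq> cfs sc G" "m \<in> Wset G Bk" shows "tsideal G m"
proof -
  obtain ms where "m = ideal_prod G ms" "set ms \<subseteq> Bk" using assms(2) unfolding Wset_def by auto
  moreover then have "\<And>I. I \<in> set ms \<Longrightarrow> tsideal G I" using assms(1) cfs_ts by auto
  ultimately show ?thesis using prod_ts by simp
qed

lemma prod_app_sub1: "(\<And>I. I \<in> set ms1 \<Longrightarrow> tsideal G I) \<Longrightarrow> (\<And>I. I \<in> set ms2 \<Longrightarrow> tsideal G I) \<Longrightarrow>
   ideal_prod G (ms1 @ ms2) \<subseteq> ideal_prod G ms1"
proof (induction ms1)
  case Nil then show ?case using prod_ts[of ms2] ts_simp(1) by auto
next
  case (Cons a ms1)
  then have "ideal_prod G (ms1 @ ms2) \<subseteq> ideal_prod G ms1" by auto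
  then show ?case using im_mono by simp
qed

lemma prod_app_sub2: "(\<And>I. I \<in> set ms1 \<Longrightarrow> tsideal G I) \<Longrightarrow> (\<And>I. I \<in> set ms2 \<Longrightarrow> tsideal G I) \<Longrightarrow>
   ideal_prod G (ms1 @ ms2) \<subseteq> ideal_prod G ms2"
proof (induction ms1)
  case Nil then show ?case by auto
next
  case (Cons a ms1)
  have "ideal_prod G (a # ms1 @ ms2) \<subseteq> ideal_prod G (ms1 @ ms2)"
    using im_sub_right[of a "ideal_prod G (ms1 @ ms2)"] Cons.prems prod_ts[of "ms1 @ ms2"] ts_simp(1)
    by auto
  then show ?case using Cons by auto
qed

lemma W_meet: assumes "Bk \<subseteq> cfs sc G" "m1 \<in> Wset G Bk" "m2 \<in> Wset G Bk"
  shows "\<exists>m\<in>Wset G Bk. m \<subseteq> m1 \<and> m \<subseteq> m2"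
proof -
  obtain ms1 ms2 where "m1 = ideal_prod G ms1" "m2 = ideal_prod G ms2" "set ms1 \<subseteq> Bk" "set ms2 \<subseteq> Bk"
    using assms unfolding Wset_def by auto
  moreover then have "ideal_prod G (ms1 @ ms2) \<in> Wset G Bk" unfolding Wset_def by (intro CollectI exI[of _ "ms1 @ ms2"]) auto
  moreover have "\<And>I. I \<in> set ms1 \<Longrightarrow> tsideal G I" "\<And>I. I \<in> set ms2 \<Longrightarrow> tsideal G I"
    using calculation(3,4) assms(1) cfs_ts by auto
  ultimately show ?thesis using prod_app_sub1[of ms1 ms2] prod_app_sub2[of ms1 ms2] by blast
qed

lemma prod_sub_factor: "p \<in> set ms \<Longrightarrow> (\<And>I. I \<in> set ms \<Longrightarrow> tsideal G I) \<Longrightarrow> ideal_prod G ms \<subseteq> p"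
proof (induction ms)
  case Nil then show ?case by auto
next
  case (Cons a ms)
  have ts: "tsideal G (ideal_prod G ms)" using Cons.prems prod_ts by auto
  show ?case
  proof (cases "p = a")
    case True
    then show ?thesis using im_sub_left[of a "ideal_prod G ms"] Cons.prems ts ts_simp(1) by auto
  next
    case False
    then have "ideal_prod G ms \<subseteq> p" using Cons by auto
    then show ?thesis using im_sub_right[of a "ideal_prod G ms"] Cons.prems ts ts_simp(1) by auto
  qed
qed

definition comax :: "'a set \<Rightarrow> 'a set \<Rightarrow> bool" where
  "comax I J \<longleftrightarrow> (\<exists>p\<in>I. \<exists>q\<in>J. p + q = 1)"

lemma comax_sym: "comax I J \<Longrightarrow> comax J I"
  unfolding comax_def by (metis add.commute)

lemma comax_G: "tsideal G I \<Longrightarrow> comax I G"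
  unfolding comax_def using ts_simp(2) G1 by force

lemma comax_max: assumes p: "p \<in> cfs sc G" and q: "q \<in> cfs sc G" and pq: "p \<noteq> q"
  shows "comax p q"
proof -
  have mp: "max_ideal G p" and mq: "max_ideal G q" using p q unfolding cfs_def by auto
  have tp: "tsideal G p" and tq: "tsideal G q" using p q cfs_ts by auto
  let ?J = "{x + y | x y. x \<in> p \<and> y \<in> q}"
  have tJ: "tsideal G ?J" unfolding tsideal_def
  proof (intro conjI ballI)
    show "?J \<subseteq> G" using ts_simp(1)[OF tp] ts_simp(1)[OF tq] Gadd by blast
    have "(0::'a) = 0 + 0" by simp
    then show "0 \<in> ?J" using ts_simp(2)[OF tp] ts_simp(2)[OF tq] by blast
    fix x assume "x \<in> ?J"
    then obtain a b where ab: "a \<in> p" "b \<in> q" "x = a + b" by auto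
    {
      fix y assume "y \<in> ?J"
      then obtain c d where cd: "c \<in> p" "d \<in> q" "y = c + d" by auto
      have "x + y = (a + c) + (b + d)" using ab cd by (simp add: algebra_simps)
      moreover have "a + c \<in> p" "b + d \<in> q" using ab cd ts_simp(3)[OF tp] ts_simp(3)[OF tq] by auto
      ultimately show "x + y \<in> ?J" by blast
    }
    have "- x = (- a) + (- b)" using ab by simp
    moreover have "- a \<in> p" "- b \<in> q" using ab ts_simp(4)[OF tp] ts_simp(4)[OF tq] by auto
    ultimately show "- x \<in> ?J" by blast
    fix g assume g: "g \<in> G"
    have "g * x = g * a + g * b" using ab by (simp add: distrib_left)
    moreover have "g * a \<in> p" "g * b \<in> q" using ab g ts_simp(5)[OF tp] ts_simp(5)[OF tq] by auto
    ultimately show "g * x \<in> ?J" by blast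
    have "x * g = a * g + b * g" using ab by (simp add: distrib_right)
    moreover have "a * g \<in> p" "b * g \<in> q" using ab g ts_simp(6)[OF tp] ts_simp(6)[OF tq] by auto
    ultimately show "x * g \<in> ?J" by blast
  qed
  have pJ: "p \<subseteq> ?J"
  proof
    fix x assume "x \<in> p" then show "x \<in> ?J" using ts_simp(2)[OF tq] by (metis (mono_tags, lifting) CollectI add_0_right)
  qed
  have qJ: "q \<subseteq> ?J"
  proof
    fix x assume "x \<in> q" then show "x \<in> ?J" using ts_simp(2)[OF tp] by (metis (mono_tags, lifting) CollectI add_0_left)
  qed
  have "?J = G"
  proof (rule ccontr)
    assume "?J \<noteq> G"
    then have "?J = p" using mp tJ pJ unfolding max_ideal_def by blast
    then have "q \<subseteq> p" using qJ by auto
    then have "p = q" using mq tp mp unfolding max_ideal_def by blast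
    then show False using pq by auto
  qed
  then have "1 \<in> ?J" using G1 by auto
  then show ?thesis unfolding comax_def by auto
qed

lemma comax_mult: assumes I: "tsideal G I" and J: "tsideal G J" and J': "tsideal G J'"
  and c1: "comax I J" and c2: "comax I J'"
  shows "comax I (ideal_mult J J')"
proof -
  obtain i j where ij: "i \<in> I" "j \<in> J" "i + j = 1" using c1 unfolding comax_def by auto
  obtain i' j' where ij': "i' \<in> I" "j' \<in> J'" "i' + j' = 1" using c2 unfolding comax_def by auto
  have "1 = i + j * (i' + j')" using ij(3) ij'(3) by simp
  also have "\<dots> = (i + j * i') + j * j'" by (simp add: distrib_left add.assoc)
  finally have eq: "(i + j * i') + j * j' = 1" by simp
  have jG: "j \<in> G" using ts_simp(1)[OF J] ij(2) by blast
  have "j * i' \<in> I" using ts_simp(5)[OF I jG ij'(1)] .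
  then have "i + j * i' \<in> I" using ts_simp(3)[OF I ij(1)] by blast
  moreover have "j * j' \<in> ideal_mult J J'" using ij ij' im_base by auto
  ultimately show ?thesis unfolding comax_def using eq by blast
qed

lemma comax_W: assumes B1: "Bk1 \<in> blocks sc G R" and B2: "Bk2 \<in> blocks sc G R" and ne: "Bk1 \<noteq> Bk2"
  and m1: "m1 \<in> Wset G Bk1" and m2: "m2 \<in> Wset G Bk2"
  shows "comax m1 m2"
proof -
  have s1: "Bk1 \<subseteq> cfs sc G" and s2: "Bk2 \<subseteq> cfs sc G" using B1 B2 blocks_sub by auto
  have disj: "Bk1 \<inter> Bk2 = {}" using B1 B2 ne eqv unfolding blocks_def by (meson quotient_disj)
  obtain ms1 ms2 where ms: "m1 = ideal_prod G ms1" "m2 = ideal_prod G ms2" "set ms1 \<subseteq> Bk1" "set ms2 \<subseteq> Bk2"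
    using m1 m2 unfolding Wset_def by auto
  have step1: "comax p (ideal_prod G ms)" if "p \<in> Bk1" "set ms \<subseteq> Bk2" for p ms
    using that(2)
  proof (induction ms)
    case Nil then show ?case using comax_G cfs_ts s1 that(1) by auto
  next
    case (Cons a ms)
    have "p \<noteq> a" using disj Cons.prems that(1) by auto
    then have "comax p a" using comax_max s1 s2 that(1) Cons.prems by auto
    then show ?case using Cons comax_mult[of p a "ideal_prod G ms"] cfs_ts s1 s2 that(1) prod_ts[of ms]
      by (auto simp: subset_iff)
  qed
  have "comax (ideal_prod G ms) (ideal_prod G ms2)" if "set ms \<subseteq> Bk1" for ms
    using that
  proof (induction ms)
    case Nil then show ?case
      using comax_G[of "ideal_prod G ms2"] prod_ts[of ms2] ms cfs_ts s2 comax_sym by (auto simp: subset_iff)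
  next
    case (Cons a ms)
    have "comax (ideal_prod G ms2) a" using step1[of a ms2] Cons.prems ms comax_sym by auto
    moreover have "comax (ideal_prod G ms2) (ideal_prod G ms)" using Cons comax_sym by auto
    ultimately have "comax (ideal_prod G ms2) (ideal_mult a (ideal_prod G ms))"
      using comax_mult[of "ideal_prod G ms2" a "ideal_prod G ms"] prod_ts[of ms2] prod_ts[of ms] cfs_ts s1 s2
        Cons.prems ms by (auto simp: subset_iff)
    then show ?case using comax_sym by auto
  qed
  then show ?thesis using ms by auto
qed

end



locale qm = base sc G R for sc :: "'k::field \<Rightarrow> 'a::ring_1 \<Rightarrow> 'a" and G R +
  fixes M :: "'m::ab_group_add set" and N :: "'m set" and act :: "'a \<Rightarrow> 'm \<Rightarrow> 'm"
  assumes am: "amod M act" and NM: "N \<subseteq> M" and N0: "0 \<in> N"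
    and Nadd: "x \<in> N \<Longrightarrow> y \<in> N \<Longrightarrow> x + y \<in> N" and Nneg: "x \<in> N \<Longrightarrow> - x \<in> N"
    and Nact: "x \<in> N \<Longrightarrow> act a x \<in> N"
begin

lemma M0: "0 \<in> M" and Madd: "v \<in> M \<Longrightarrow> w \<in> M \<Longrightarrow> v + w \<in> M" and Mneg: "v \<in> M \<Longrightarrow> - v \<in> M"
  and Mact: "v \<in> M \<Longrightarrow> act a v \<in> M"
  and act_addr: "v \<in> M \<Longrightarrow> w \<in> M \<Longrightarrow> act a (v + w) = act a v + act a w"
  and act_addl: "v \<in> M \<Longrightarrow> act (a + b) v = act a v + act b v"
  and act_mult: "v \<in> M \<Longrightarrow> act (a * b) v = act a (act b v)"
  and act_one: "v \<in> M \<Longrightarrow> act 1 v = v"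
  using am unfolding amod_def by auto

lemma Mdiff: "v \<in> M \<Longrightarrow> w \<in> M \<Longrightarrow> v - w \<in> M"
  using Madd Mneg by (metis diff_conv_add_uminus)

lemma act_zr: "act a 0 = 0"
  using act_addr[OF M0 M0, of a] by simp

lemma act_zl: "v \<in> M \<Longrightarrow> act 0 v = 0"
  using act_addl[of v 0 0] by simp

lemma act_negl: assumes "v \<in> M" shows "act (- a) v = - act a v"
proof -
  have "act a v + act (- a) v = 0" using act_addl[of v a "- a"] act_zl assms by simp
  then show ?thesis by (simp add: add_eq_0_iff)
qed

lemma act_negr: assumes "v \<in> M" shows "act a (- v) = - act a v"
proof -
  have "act a v + act a (- v) = 0" using act_addr[of v "- v" a] act_zr Mneg assms by simp
  then show ?thesis by (simp add: add_eq_0_iff)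
qed

lemma act_diffl: "v \<in> M \<Longrightarrow> act (a - b) v = act a v - act b v"
  using act_addl[of v a "- b"] act_negl by simp

lemma act_diffr: "v \<in> M \<Longrightarrow> w \<in> M \<Longrightarrow> act a (v - w) = act a v - act a w"
  using act_addr[of v "- w" a] act_negr Mneg by simp

lemma Msum: "finite I \<Longrightarrow> (\<And>i. i \<in> I \<Longrightarrow> f i \<in> M) \<Longrightarrow> sum f I \<in> M"
  by (induction rule: finite_induct) (auto simp: M0 Madd)

lemma act_suml: "finite I \<Longrightarrow> v \<in> M \<Longrightarrow> act (sum f I) v = (\<Sum>i\<in>I. act (f i) v)"
  by (induction rule: finite_induct) (auto simp: act_zl act_addl)

lemma act_sumr: "finite I \<Longrightarrow> (\<And>i. i \<in> I \<Longrightarrow> f i \<in> M) \<Longrightarrow> act a (sum f I) = (\<Sum>i\<in>I. act a (f i))"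
  by (induction rule: finite_induct) (auto simp: act_zr act_addr Msum)

lemma Ndiff: "x \<in> N \<Longrightarrow> y \<in> N \<Longrightarrow> x - y \<in> N"
  using Nadd Nneg by (metis diff_conv_add_uminus)

lemma Nsum: "finite I \<Longrightarrow> (\<And>i. i \<in> I \<Longrightarrow> f i \<in> N) \<Longrightarrow> sum f I \<in> N"
  by (induction rule: finite_induct) (auto simp: N0 Nadd)

abbreviation V where "V Bk \<equiv> vsub G M N act Bk"

lemma G_W: "G \<in> Wset G Bk"
  unfolding Wset_def by (auto intro!: exI[of _ "[]"])

lemma vsub_M: "V Bk \<subseteq> M" unfolding vsub_def by auto

lemma N_vsub: "N \<subseteq> V Bk"
  unfolding vsub_def using NM Nact G_W by blast

lemma vsub_add: assumes "Bk \<subseteq> cfs sc G" "v \<in> V Bk" "w \<in> V Bk" shows "v + w \<in> V Bk"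
proof -
  obtain m1 m2 where m: "m1 \<in> Wset G Bk" "m2 \<in> Wset G Bk" "\<forall>x\<in>m1. act x v \<in> N" "\<forall>x\<in>m2. act x w \<in> N"
    and vw: "v \<in> M" "w \<in> M" using assms unfolding vsub_def by auto
  obtain m where mm: "m \<in> Wset G Bk" "m \<subseteq> m1" "m \<subseteq> m2" using W_meet[OF assms(1) m(1) m(2)] by blast
  have "\<forall>x\<in>m. act x (v + w) \<in> N"
  proof
    fix x assume x: "x \<in> m"
    have "act x v \<in> N" "act x w \<in> N" using x mm(2,3) m(3,4) by auto
    then show "act x (v + w) \<in> N" using act_addr[OF vw] Nadd by simp
  qed
  then show ?thesis unfolding vsub_def using mm(1) Madd[OF vw] by blast
qed

lemma vsub_neg: assumes "v \<in> V Bk" shows "- v \<in> V Bk"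
proof -
  obtain m where m: "m \<in> Wset G Bk" "\<forall>x\<in>m. act x v \<in> N" and v: "v \<in> M"
    using assms unfolding vsub_def by auto
  have "\<forall>x\<in>m. act x (- v) \<in> N" using m(2) act_negr[OF v] Nneg by simp
  then show ?thesis unfolding vsub_def using m(1) Mneg[OF v] by blast
qed

lemma vsub_diff: "Bk \<subseteq> cfs sc G \<Longrightarrow> v \<in> V Bk \<Longrightarrow> w \<in> V Bk \<Longrightarrow> v - w \<in> V Bk"
  using vsub_add vsub_neg by (metis diff_conv_add_uminus)

lemma vsub_actG: assumes "Bk \<subseteq> cfs sc G" "g \<in> G" "v \<in> V Bk" shows "act g v \<in> V Bk"
proof -
  obtain m where m: "m \<in> Wset G Bk" "\<forall>x\<in>m. act x v \<in> N" and v: "v \<in> M"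
    using assms unfolding vsub_def by auto
  have tm: "tsideal G m" using W_ts[OF assms(1) m(1)] .
  have "\<forall>x\<in>m. act x (act g v) \<in> N"
  proof
    fix x assume x: "x \<in> m"
    have "x * g \<in> m" using ts_simp(6)[OF tm assms(2) x] .
    then have "act (x * g) v \<in> N" using m(2) by blast
    then show "act x (act g v) \<in> N" using act_mult[OF v, of x g] by simp
  qed
  then show ?thesis unfolding vsub_def using m(1) Mact[OF v] by blast
qed

lemma vsub_0: "0 \<in> V Bk" using N_vsub N0 by auto

lemma vsub_sum: "finite I \<Longrightarrow> Bk \<subseteq> cfs sc G \<Longrightarrow> (\<And>i. i \<in> I \<Longrightarrow> f i \<in> V Bk) \<Longrightarrow> sum f I \<in> V Bk"
  by (induction I rule: finite_induct) (auto simp: vsub_0 vsub_add)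

definition others where
  "others B = \<Union>{V Bk | Bk. Bk \<in> blocks sc G R \<and> Bk \<noteq> B}"

abbreviation OB where "OB B \<equiv> addcl (others B)"

lemma others_M: "others B \<subseteq> M" unfolding others_def using vsub_M by auto

lemma O_M: "x \<in> OB B \<Longrightarrow> x \<in> M"
  using addcl_closed[of x "others B" M] others_M M0 Madd by auto

lemma O_add: "x \<in> OB B \<Longrightarrow> y \<in> OB B \<Longrightarrow> x + y \<in> OB B" by (rule addcl_plus)

lemma O_neg: "x \<in> OB B \<Longrightarrow> - x \<in> OB B"
  by (erule addcl_neg) (auto simp: others_def intro: vsub_neg)

lemma O_diff: "x \<in> OB B \<Longrightarrow> y \<in> OB B \<Longrightarrow> x - y \<in> OB B"
  using O_add O_neg by (metis diff_conv_add_uminus)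

lemma O_0: "0 \<in> OB B" by (rule addcl.addcl_zero)

lemma O_base: "Bk \<in> blocks sc G R \<Longrightarrow> Bk \<noteq> B \<Longrightarrow> x \<in> V Bk \<Longrightarrow> x \<in> OB B"
  by (rule addcl_base) (auto simp: others_def)

lemma O_actG: assumes "g \<in> G" "x \<in> OB B" shows "act g x \<in> OB B"
proof -
  have "act g x \<in> addcl (others B)"
    using assms(2)
  proof (induction rule: addcl.induct)
    case addcl_zero then show ?case by (simp add: act_zr addcl.addcl_zero)
  next
    case (addcl_add x y)
    have xM: "x \<in> M" using addcl_add(1) others_M by blast
    have yM: "y \<in> M" using addcl_add(2) O_M by blast
    obtain Bk where Bk: "Bk \<in> blocks sc G R" "Bk \<noteq> B" "x \<in> V Bk" using addcl_add(1) unfolding others_def by auto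
    have "act g x \<in> V Bk" using vsub_actG[OF blocks_sub[OF Bk(1)] assms(1) Bk(3)] .
    then have "act g x \<in> others B" using Bk unfolding others_def by blast
    then have "act g x + act g y \<in> addcl (others B)" using addcl_add(3) by (rule addcl.addcl_add)
    then show ?case using act_addr[OF xM yM] by simp
  qed
  then show ?thesis .
qed

lemma O_sum: "finite I \<Longrightarrow> (\<And>i. i \<in> I \<Longrightarrow> f i \<in> OB B) \<Longrightarrow> sum f I \<in> OB B"
  by (rule addcl_sum)

lemma SEPg: assumes B: "B \<in> blocks sc G R" and ob: "ob \<in> OB B" and m: "m \<in> Wset G B"
  shows "\<exists>g\<in>G. 1 - g \<in> m \<and> act g ob \<in> N"
  using ob
proof (induction rule: addcl.induct)
  case addcl_zero
  have "1 - 1 \<in> m" using ts_simp(2)[OF W_ts[OF blocks_sub[OF B] m]] by simp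
  moreover have "act 1 0 \<in> N" using act_zr N0 by simp
  ultimately show ?case using G1 by blast
next
  case (addcl_add x y)
  obtain g' where g': "g' \<in> G" "1 - g' \<in> m" "act g' y \<in> N" using addcl_add by auto
  obtain Bk where Bk: "Bk \<in> blocks sc G R" "Bk \<noteq> B" "x \<in> V Bk" using addcl_add(1) unfolding others_def by auto
  obtain m' where m': "m' \<in> Wset G Bk" "\<forall>z\<in>m'. act z x \<in> N" and xM: "x \<in> M"
    using Bk(3) unfolding vsub_def by auto
  have tm: "tsideal G m" using W_ts[OF blocks_sub[OF B] m] .
  have tm': "tsideal G m'" using W_ts[OF blocks_sub[OF Bk(1)] m'(1)] .
  obtain p q where pq: "p \<in> m" "q \<in> m'" "p + q = 1" using comax_W[OF B Bk(1) Bk(2)[symmetric] m m'(1)]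
    unfolding comax_def by auto
  have yM: "y \<in> M" using addcl_add(2) O_M by auto
  have qG: "q \<in> G" using ts_simp(1)[OF tm'] pq by auto
  have p1: "p = 1 - q" using pq(3) by (simp add: eq_diff_eq)
  have eq1: "1 - q * g' = (1 - g') + p * g'"
    unfolding p1 by (simp add: algebra_simps)
  have "p * g' \<in> m" using ts_simp(6)[OF tm g'(1) pq(1)] .
  then have "(1 - g') + p * g' \<in> m" using ts_simp(3)[OF tm g'(2)] by blast
  then have c1: "1 - q * g' \<in> m" by (simp only: eq1)
  have "q * g' \<in> m'" using ts_simp(6)[OF tm'] pq g' by auto
  then have n1: "act (q * g') x \<in> N" using m'(2) by blast
  have "act q (act g' y) \<in> N" using g'(3) Nact by blast
  then have n2: "act (q * g') y \<in> N" using act_mult[OF yM] by simp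
  have "act (q * g') x + act (q * g') y \<in> N" using Nadd[OF n1 n2] .
  then have "act (q * g') (x + y) \<in> N" using act_addr[OF xM yM] by simp
  then show ?case using c1 qG g' Gmult by blast
qed

lemma killed_fix: assumes "v \<in> M" "\<forall>x\<in>m. act x v \<in> N" "1 - g \<in> m"
  shows "v - act g v \<in> N"
proof -
  have "act (1 - g) v \<in> N" using assms(2,3) by blast
  then show ?thesis using act_diffl[OF assms(1), of 1 g] act_one[OF assms(1)] by simp
qed

lemma SEP: assumes B: "B \<in> blocks sc G R" and z: "z \<in> V B" and ob: "ob \<in> OB B" and zo: "z - ob \<in> N"
  shows "z \<in> N"
proof -
  obtain m where m: "m \<in> Wset G B" "\<forall>x\<in>m. act x z \<in> N" and zM: "z \<in> M" using z unfolding vsub_def by auto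
  obtain g where g: "g \<in> G" "1 - g \<in> m" "act g ob \<in> N" using SEPg[OF B ob m(1)] by auto
  have oM: "ob \<in> M" using O_M ob by auto
  have "act g (z - ob) \<in> N" using Nact zo by blast
  then have "act g z - act g ob \<in> N" using act_diffr[OF zM oM] by simp
  then have "(act g z - act g ob) + act g ob \<in> N" using g(3) Nadd by blast
  then have gz: "act g z \<in> N" by simp
  have "z - act g z \<in> N" using killed_fix[OF zM m(2) g(2)] .
  then have "(z - act g z) + act g z \<in> N" using gz Nadd by blast
  then show ?thesis by simp
qed

lemma decomp: assumes bm: "block_mod sc G R M N act" and B: "B \<in> blocks sc G R" and v: "v \<in> M"
  shows "\<exists>vB\<in>V B. \<exists>ob\<in>OB B. v - vB - ob \<in> N"
proof -
  obtain f where f: "block_family sc G R M N act f" and fv: "v - (\<Sum>Bk\<in>{Bk. f Bk \<noteq> 0}. f Bk) \<in> N"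
  proof -
    have "\<forall>v\<in>M. \<exists>f. block_family sc G R M N act f \<and> v - (\<Sum>Bk\<in>{Bk. f Bk \<noteq> 0}. f Bk) \<in> N"
      using bm unfolding block_mod_def by (rule conjunct1)
    then show ?thesis using v that by blast
  qed
  let ?S = "{Bk. f Bk \<noteq> 0}"
  have fin: "finite ?S" and fam: "\<And>Bk. f Bk \<noteq> 0 \<Longrightarrow> Bk \<in> blocks sc G R \<and> f Bk \<in> V Bk"
    using f unfolding block_family_def by blast+
  have fB: "f B \<in> V B"
  proof (cases "f B = 0")
    case True then show ?thesis using vsub_0 by simp
  next
    case False then show ?thesis using fam by blast
  qed
  have ob: "(\<Sum>Bk\<in>?S - {B}. f Bk) \<in> OB B"
  proof (rule O_sum)
    show "finite (?S - {B})" using fin by blast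
    fix Bk assume "Bk \<in> ?S - {B}"
    then have "f Bk \<noteq> 0" "Bk \<noteq> B" by blast+
    then show "f Bk \<in> OB B" using fam O_base by blast
  qed
  have "(\<Sum>Bk\<in>?S. f Bk) = f B + (\<Sum>Bk\<in>?S - {B}. f Bk)"
  proof (cases "B \<in> ?S")
    case True then show ?thesis using sum.remove[OF fin True] by simp
  next
    case False then show ?thesis by simp
  qed
  then have eq: "v - f B - (\<Sum>Bk\<in>?S - {B}. f Bk) = v - (\<Sum>Bk\<in>?S. f Bk)" by (simp add: algebra_simps)
  have "v - f B - (\<Sum>Bk\<in>?S - {B}. f Bk) \<in> N" using fv by (simp only: eq)
  then show ?thesis using fB ob by blast
qed

end



primrec chainF :: "('a set \<Rightarrow> 'a) \<Rightarrow> nat \<Rightarrow> 'a set" where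
  "chainF nx 0 = {}"
| "chainF nx (Suc k) = insert (nx (chainF nx k)) (chainF nx k)"

lemma subst_mem: "a = b \<Longrightarrow> a \<in> S \<Longrightarrow> b \<in> S" by simp

definition Nm :: "'a::ring_1 set \<Rightarrow> 'a set" where
  "Nm m = addcl {a * x | a x. x \<in> m}"

context base
begin

lemma RI: assumes "finite I"
  shows "\<exists>c'. (\<Sum>t\<in>h ` I. sc (c' t) t) = (\<Sum>i\<in>I. sc (c i) (h i))"
proof -
  have "(\<Sum>i\<in>I. sc (c i) (h i)) = (\<Sum>t\<in>h ` I. \<Sum>i\<in>{i. i \<in> I \<and> h i = t}. sc (c i) (h i))"
    by (rule sum.image_gen[OF assms])
  also have "\<dots> = (\<Sum>t\<in>h ` I. \<Sum>i\<in>{i. i \<in> I \<and> h i = t}. sc (c i) t)"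
    by (rule sum.cong) auto
  also have "\<dots> = (\<Sum>t\<in>h ` I. sc (\<Sum>i\<in>{i. i \<in> I \<and> h i = t}. c i) t)"
    by (simp add: vs.scale_sum_left)
  finally show ?thesis by (intro exI[of _ "\<lambda>t. \<Sum>i\<in>{i. i \<in> I \<and> h i = t}. c i"]) simp
qed

lemma sum_restrict: assumes "finite T" "S \<subseteq> T"
  shows "(\<Sum>t\<in>T. sc (if t \<in> S then c t else 0) t) = (\<Sum>t\<in>S. sc (c t) t)"
  by (rule sum.mono_neutral_cong_right[OF assms]) auto

lemma LU: assumes "finite T1" "finite T2"
  shows "\<exists>c. (\<Sum>t\<in>T1 \<union> T2. sc (c t) t) = (\<Sum>t\<in>T1. sc (c1 t) t) + (\<Sum>t\<in>T2. sc (c2 t) t)"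
proof -
  let ?c = "\<lambda>t. (if t \<in> T1 then c1 t else 0) + (if t \<in> T2 then c2 t else 0)"
  have "(\<Sum>t\<in>T1 \<union> T2. sc (?c t) t) = (\<Sum>t\<in>T1 \<union> T2. sc (if t \<in> T1 then c1 t else 0) t)
      + (\<Sum>t\<in>T1 \<union> T2. sc (if t \<in> T2 then c2 t else 0) t)"
    by (simp add: sc_addl sum.distrib)
  also have "\<dots> = (\<Sum>t\<in>T1. sc (c1 t) t) + (\<Sum>t\<in>T2. sc (c2 t) t)"
    using sum_restrict[of "T1 \<union> T2" T1 c1] sum_restrict[of "T1 \<union> T2" T2 c2] assms by simp
  finally have "(\<Sum>t\<in>T1 \<union> T2. sc (?c t) t) = (\<Sum>t\<in>T1. sc (c1 t) t) + (\<Sum>t\<in>T2. sc (c2 t) t)" .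
  then show ?thesis by (rule exI[of _ ?c])
qed

lemma sc_sum_G: "finite S \<Longrightarrow> S \<subseteq> G \<Longrightarrow> (\<Sum>s\<in>S. sc (c s) s) \<in> G"
  by (rule Gsum) (auto intro: Gsc)

definition lgen :: "'a set \<Rightarrow> 'a set" where
  "lgen F = {\<Sum>f\<in>F. c f * f | c. \<forall>f\<in>F. c f \<in> G}"

lemma lgenI: "\<forall>f\<in>F. c f \<in> G \<Longrightarrow> x = (\<Sum>f\<in>F. c f * f) \<Longrightarrow> x \<in> lgen F"
  unfolding lgen_def by blast

lemma lgen_li: assumes F: "finite F" "F \<subseteq> G" shows "left_ideal G (lgen F)"
  unfolding left_ideal_def
proof (intro conjI ballI)
  show "lgen F \<subseteq> G"
  proof
    fix x assume "x \<in> lgen F"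
    then obtain c where c: "\<forall>f\<in>F. c f \<in> G" "x = (\<Sum>f\<in>F. c f * f)" unfolding lgen_def by blast
    have "(\<Sum>f\<in>F. c f * f) \<in> G" using F c(1) by (intro Gsum) (auto intro: Gmult)
    then show "x \<in> G" using c(2) by simp
  qed
  have "(0::'a) = (\<Sum>f\<in>F. 0 * f)" by simp
  then show "0 \<in> lgen F" using G0 by (intro lgenI[of F "\<lambda>_. 0"]) auto
  fix x assume "x \<in> lgen F"
  then obtain c where c: "\<forall>f\<in>F. c f \<in> G" "x = (\<Sum>f\<in>F. c f * f)" unfolding lgen_def by blast
  {
    fix y assume "y \<in> lgen F"
    then obtain d where d: "\<forall>f\<in>F. d f \<in> G" "y = (\<Sum>f\<in>F. d f * f)" unfolding lgen_def by blast
    have "x + y = (\<Sum>f\<in>F. (c f + d f) * f)" using c d by (simp add: distrib_right sum.distrib)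
    moreover have "\<forall>f\<in>F. c f + d f \<in> G" using c d Gadd by blast
    ultimately show "x + y \<in> lgen F" by (intro lgenI[of F "\<lambda>f. c f + d f"])
  }
  have "- x = (\<Sum>f\<in>F. (- c f) * f)" using c by (simp add: sum_negf)
  moreover have "\<forall>f\<in>F. - c f \<in> G" using c Gneg by blast
  ultimately show "- x \<in> lgen F" by (intro lgenI[of F "\<lambda>f. - c f"])
  fix g assume g: "g \<in> G"
  have "g * x = (\<Sum>f\<in>F. (g * c f) * f)" using c by (simp add: sum_distrib_left mult.assoc)
  moreover have "\<forall>f\<in>F. g * c f \<in> G" using c g Gmult by blast
  ultimately show "g * x \<in> lgen F" by (intro lgenI[of F "\<lambda>f. g * c f"])
qed

lemma lgen_mono: assumes "finite F'" "F \<subseteq> F'" shows "lgen F \<subseteq> lgen F'"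
proof
  fix x assume "x \<in> lgen F"
  then obtain c where c: "\<forall>f\<in>F. c f \<in> G" "x = (\<Sum>f\<in>F. c f * f)" unfolding lgen_def by blast
  let ?d = "\<lambda>f. if f \<in> F then c f else 0"
  have "(\<Sum>f\<in>F'. ?d f * f) = (\<Sum>f\<in>F. c f * f)"
    by (rule sum.mono_neutral_cong_right[OF assms]) auto
  moreover have "\<forall>f\<in>F'. ?d f \<in> G" using c G0 by auto
  ultimately show "x \<in> lgen F'" using c(2) by (intro lgenI[of F' ?d]) auto
qed

lemma lgen_base: assumes "finite F" "f \<in> F" shows "f \<in> lgen F"
proof -
  let ?d = "\<lambda>f'. if f' = f then 1 else (0::'a)"
  have "(\<Sum>f'\<in>F. ?d f' * f') = (\<Sum>f'\<in>F. if f' = f then f' else 0)"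
    by (rule sum.cong) auto
  also have "\<dots> = f" using assms by simp
  finally have "f = (\<Sum>f'\<in>F. ?d f' * f')" by simp
  moreover have "\<forall>f'\<in>F. ?d f' \<in> G" using G0 G1 by auto
  ultimately show ?thesis by (intro lgenI[of F ?d])
qed

lemma ts_li: "tsideal G X \<Longrightarrow> left_ideal G X"
  unfolding tsideal_def left_ideal_def by blast

end

locale setting = base sc G R for sc :: "'k::field \<Rightarrow> 'a::ring_1 \<Rightarrow> 'a" and G R +
  fixes B :: "'a set set"
  assumes shc: "strong_HC_block_subalg sc G R" and Bq: "B \<in> cfs sc G // R" and finB: "finite B"
    and noeth: "noetherian G" and fgl: "a_hat_fg_left G B"
begin

lemma Bb: "B \<in> blocks sc G R" using Bq unfolding blocks_def .

lemma Bcfs: "B \<subseteq> cfs sc G" using blocks_sub[OF Bb] .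

lemma fg: assumes X: "left_ideal G X" shows "\<exists>F. finite F \<and> F \<subseteq> X \<and> X \<subseteq> lgen F"
proof (rule ccontr)
  assume H: "\<not> ?thesis"
  have XG: "X \<subseteq> G" using X unfolding left_ideal_def by blast
  define nx where "nx F = (SOME x. x \<in> X \<and> x \<notin> lgen F)" for F
  have nxp: "nx F \<in> X \<and> nx F \<notin> lgen F" if "finite F" "F \<subseteq> X" for F
  proof -
    have "\<not> X \<subseteq> lgen F" using H that by blast
    then have "\<exists>x. x \<in> X \<and> x \<notin> lgen F" by blast
    then show ?thesis unfolding nx_def by (rule someI_ex)
  qed
  have fs: "finite (chainF nx k) \<and> chainF nx k \<subseteq> X" for k
  proof (induction k)
    case 0 then show ?case by simp
  next
    case (Suc k) then show ?case using nxp[of "chainF nx k"] by simp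
  qed
  let ?I = "\<lambda>k. lgen (chainF nx k)"
  have ch: "\<forall>k. left_ideal G (?I k) \<and> ?I k \<subseteq> ?I (Suc k)"
  proof
    fix k
    have "left_ideal G (?I k)" using lgen_li[of "chainF nx k"] fs[of k] XG by blast
    moreover have "?I k \<subseteq> ?I (Suc k)" using lgen_mono[of "chainF nx (Suc k)" "chainF nx k"] fs[of "Suc k"] by auto
    ultimately show "left_ideal G (?I k) \<and> ?I k \<subseteq> ?I (Suc k)" by blast
  qed
  have acc: "\<forall>I::nat \<Rightarrow> 'a set. (\<forall>n. left_ideal G (I n) \<and> I n \<subseteq> I (Suc n)) \<longrightarrow> (\<exists>N. \<forall>n\<ge>N. I n = I N)"
    using noeth unfolding noetherian_def by (rule conjunct1)
  have "\<exists>N. \<forall>k\<ge>N. ?I k = ?I N" using mp[OF spec[OF acc, of ?I] ch] .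
  then obtain n where n: "\<forall>k\<ge>n. ?I k = ?I n" by blast
  have e: "?I (Suc n) = ?I n" using spec[OF n, of "Suc n"] le_Suc_eq by blast
  have "nx (chainF nx n) \<in> ?I (Suc n)" using lgen_base[of "chainF nx (Suc n)"] fs[of "Suc n"] by simp
  then have "nx (chainF nx n) \<in> ?I n" unfolding e .
  then show False using nxp[of "chainF nx n"] fs[of n] by blast
qed

lemma fcW: "set ms \<subseteq> cfs sc G \<Longrightarrow> fin_codim sc G (ideal_prod G ms)"
proof (induction ms)
  case Nil
  show ?case unfolding fin_codim_def by (intro exI[of _ "{}"]) simp
next
  case (Cons p ms)
  let ?X = "ideal_prod G ms"
  have tX: "tsideal G ?X" using Cons.prems by (intro prod_ts) (auto intro: cfs_ts)
  have tp: "tsideal G p" using Cons.prems cfs_ts by auto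
  obtain SX where SX: "finite SX" "SX \<subseteq> G" "\<forall>x\<in>G. \<exists>c. x - (\<Sum>s\<in>SX. sc (c s) s) \<in> ?X"
    using Cons unfolding fin_codim_def by auto
  have "fin_codim sc G p" using Cons.prems unfolding cfs_def by auto
  then obtain Sp where Sp: "finite Sp" "Sp \<subseteq> G" "\<forall>x\<in>G. \<exists>c. x - (\<Sum>s\<in>Sp. sc (c s) s) \<in> p"
    unfolding fin_codim_def by auto
  obtain F where F: "finite F" "F \<subseteq> ?X" "?X \<subseteq> lgen F" using fg[OF ts_li[OF tX]] by blast
  have FG: "F \<subseteq> G" using F(2) ts_simp(1)[OF tX] by blast
  let ?h = "\<lambda>i. snd i * fst i"
  let ?T = "SX \<union> ?h ` (F \<times> Sp)"
  have fin: "finite ?T" using SX F Sp by auto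
  have "?h ` (F \<times> Sp) \<subseteq> G"
  proof
    fix y assume "y \<in> ?h ` (F \<times> Sp)"
    then obtain f s where "f \<in> F" "s \<in> Sp" "y = s * f" by auto
    then show "y \<in> G" using FG Sp(2) Gmult by blast
  qed
  then have TG: "?T \<subseteq> G" using SX(2) by blast
  have key: "\<exists>c. x - (\<Sum>t\<in>?T. sc (c t) t) \<in> ideal_mult p ?X" if x: "x \<in> G" for x
  proof -
    obtain c where c: "x - (\<Sum>s\<in>SX. sc (c s) s) \<in> ?X" using SX(3) x by blast
    then have "x - (\<Sum>s\<in>SX. sc (c s) s) \<in> lgen F" using F(3) by blast
    then obtain e where e: "\<forall>f\<in>F. e f \<in> G" "x - (\<Sum>s\<in>SX. sc (c s) s) = (\<Sum>f\<in>F. e f * f)"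
      unfolding lgen_def by blast
    have "\<forall>f\<in>F. \<exists>d. e f - (\<Sum>s\<in>Sp. sc (d s) s) \<in> p" using Sp(3) e(1) by blast
    then obtain d where d: "\<forall>f\<in>F. e f - (\<Sum>s\<in>Sp. sc (d f s) s) \<in> p" by metis
    have "(\<Sum>i\<in>F \<times> Sp. sc (d (fst i) (snd i)) (?h i)) = (\<Sum>f\<in>F. \<Sum>s\<in>Sp. sc (d f s) (s * f))"
      by (simp add: sum.cartesian_product case_prod_unfold)
    also have "\<dots> = (\<Sum>f\<in>F. (\<Sum>s\<in>Sp. sc (d f s) s) * f)"
      by (simp add: sum_distrib_right sc_ml)
    finally have eq1: "(\<Sum>i\<in>F \<times> Sp. sc (d (fst i) (snd i)) (?h i)) = (\<Sum>f\<in>F. (\<Sum>s\<in>Sp. sc (d f s) s) * f)" .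
    have "(\<Sum>f\<in>F. (e f - (\<Sum>s\<in>Sp. sc (d f s) s)) * f) \<in> ideal_mult p ?X"
    proof (rule ts_sum[OF F(1) tsideal_mult[OF tp tX]])
      fix f assume "f \<in> F"
      then show "(e f - (\<Sum>s\<in>Sp. sc (d f s) s)) * f \<in> ideal_mult p ?X" using d F(2) im_base by blast
    qed
    moreover have "(\<Sum>f\<in>F. (e f - (\<Sum>s\<in>Sp. sc (d f s) s)) * f) =
        x - (\<Sum>s\<in>SX. sc (c s) s) - (\<Sum>i\<in>F \<times> Sp. sc (d (fst i) (snd i)) (?h i))"
      unfolding eq1 e(2) by (simp add: left_diff_distrib sum_subtractf)
    ultimately have mem: "x - (\<Sum>s\<in>SX. sc (c s) s) - (\<Sum>i\<in>F \<times> Sp. sc (d (fst i) (snd i)) (?h i)) \<in> ideal_mult p ?X"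
      by (rule subst_mem[rotated])
    obtain c' where c': "(\<Sum>t\<in>?h ` (F \<times> Sp). sc (c' t) t) = (\<Sum>i\<in>F \<times> Sp. sc (d (fst i) (snd i)) (?h i))"
      using RI[of "F \<times> Sp" ?h "\<lambda>i. d (fst i) (snd i)"] F(1) Sp(1) by blast
    obtain c'' where c'': "(\<Sum>t\<in>?T. sc (c'' t) t) = (\<Sum>t\<in>SX. sc (c t) t) + (\<Sum>t\<in>?h ` (F \<times> Sp). sc (c' t) t)"
      using LU[of SX "?h ` (F \<times> Sp)" c c'] SX(1) F(1) Sp(1) by blast
    have "x - (\<Sum>t\<in>?T. sc (c'' t) t) = x - (\<Sum>s\<in>SX. sc (c s) s) - (\<Sum>i\<in>F \<times> Sp. sc (d (fst i) (snd i)) (?h i))"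
      unfolding c'' c' by simp
    then show ?thesis using mem by (intro exI[of _ c'']) (rule subst_mem[OF sym])
  qed
  have "finite ?T \<and> ?T \<subseteq> G \<and> (\<forall>x\<in>G. \<exists>c. x - (\<Sum>t\<in>?T. sc (c t) t) \<in> ideal_mult p ?X)"
    using fin TG key by blast
  then show ?case unfolding fin_codim_def ideal_prod.simps by (rule exI[of _ ?T])
qed

lemma fcWB: "n \<in> Wset G B \<Longrightarrow> fin_codim sc G n"
  unfolding Wset_def using fcW Bcfs by blast

lemma tsd_left: "x \<in> addcl {y * a | y a. y \<in> n} \<Longrightarrow> x \<in> two_sided_denom n m"
  unfolding two_sided_denom_def by (erule addcl_sub) blast

lemma FD: assumes n: "n \<in> Wset G B" and m: "m \<in> Wset G B"
  shows "\<exists>T. finite T \<and> (\<forall>a. \<exists>c. a - (\<Sum>t\<in>T. sc (c t) t) \<in> two_sided_denom n m)"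
proof -
  obtain Gs where Gs: "finite Gs" "Gs \<subseteq> a_hat G B"
    and gen: "\<forall>y\<in>a_hat G B. \<exists>c. (\<forall>g\<in>Gs. c g \<in> gamma_hat G B) \<and>
        (\<forall>n\<in>Wset G B. \<forall>m\<in>Wset G B. y (n, m) - (\<Sum>g\<in>Gs. c g n * g (n, m)) \<in> two_sided_denom n m)"
    using fgl unfolding a_hat_fg_left_def by blast
  obtain S where S: "finite S" "S \<subseteq> G" "\<forall>x\<in>G. \<exists>c. x - (\<Sum>s\<in>S. sc (c s) s) \<in> n"
    using fcWB[OF n] unfolding fin_codim_def by blast
  have tn: "tsideal G n" using W_ts[OF Bcfs n] .
  let ?h = "\<lambda>i. snd i * fst i (n, m)"
  have key: "\<exists>c. a - (\<Sum>t\<in>?h ` (Gs \<times> S). sc (c t) t) \<in> two_sided_denom n m" for a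
  proof -
    have "(\<lambda>_. a) \<in> a_hat G B" unfolding a_hat_def two_sided_denom_def by (simp add: addcl.addcl_zero)
    then obtain c where c: "\<forall>g\<in>Gs. c g \<in> gamma_hat G B"
      and c2: "a - (\<Sum>g\<in>Gs. c g n * g (n, m)) \<in> two_sided_denom n m"
    proof -
      obtain c where "\<forall>g\<in>Gs. c g \<in> gamma_hat G B"
        "\<forall>n\<in>Wset G B. \<forall>m\<in>Wset G B. a - (\<Sum>g\<in>Gs. c g n * g (n, m)) \<in> two_sided_denom n m"
        using bspec[OF gen \<open>(\<lambda>_. a) \<in> a_hat G B\<close>] by (elim exE conjE) blast
      then show ?thesis using that n m by blast
    qed
    have cG: "\<forall>g\<in>Gs. c g n \<in> G" using c n unfolding gamma_hat_def by blast
    have "\<forall>g\<in>Gs. \<exists>d. c g n - (\<Sum>s\<in>S. sc (d s) s) \<in> n" using S(3) cG by blast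
    then obtain d where d: "\<forall>g\<in>Gs. c g n - (\<Sum>s\<in>S. sc (d g s) s) \<in> n" by metis
    have "(\<Sum>i\<in>Gs \<times> S. sc (d (fst i) (snd i)) (?h i)) = (\<Sum>g\<in>Gs. \<Sum>s\<in>S. sc (d g s) (s * g (n, m)))"
      by (simp add: sum.cartesian_product case_prod_unfold)
    also have "\<dots> = (\<Sum>g\<in>Gs. (\<Sum>s\<in>S. sc (d g s) s) * g (n, m))"
      by (simp add: sum_distrib_right sc_ml)
    finally have eq1: "(\<Sum>i\<in>Gs \<times> S. sc (d (fst i) (snd i)) (?h i)) = (\<Sum>g\<in>Gs. (\<Sum>s\<in>S. sc (d g s) s) * g (n, m))" .
    have "(\<Sum>g\<in>Gs. (c g n - (\<Sum>s\<in>S. sc (d g s) s)) * g (n, m)) \<in> addcl {y * a | y a. y \<in> n}"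
    proof (rule addcl_sum[OF Gs(1)])
      fix g assume "g \<in> Gs"
      then show "(c g n - (\<Sum>s\<in>S. sc (d g s) s)) * g (n, m) \<in> addcl {y * a | y a. y \<in> n}"
        using d by (intro addcl_base) blast
    qed
    then have mem1: "(\<Sum>g\<in>Gs. (c g n - (\<Sum>s\<in>S. sc (d g s) s)) * g (n, m)) \<in> two_sided_denom n m"
      by (rule tsd_left)
    have "(a - (\<Sum>g\<in>Gs. c g n * g (n, m))) + (\<Sum>g\<in>Gs. (c g n - (\<Sum>s\<in>S. sc (d g s) s)) * g (n, m))
        = a - (\<Sum>i\<in>Gs \<times> S. sc (d (fst i) (snd i)) (?h i))"
      unfolding eq1 by (simp add: left_diff_distrib sum_subtractf)
    moreover have "(a - (\<Sum>g\<in>Gs. c g n * g (n, m))) + (\<Sum>g\<in>Gs. (c g n - (\<Sum>s\<in>S. sc (d g s) s)) * g (n, m))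
        \<in> two_sided_denom n m"
      using c2 mem1 unfolding two_sided_denom_def by (rule addcl_plus)
    ultimately have mem: "a - (\<Sum>i\<in>Gs \<times> S. sc (d (fst i) (snd i)) (?h i)) \<in> two_sided_denom n m"
      by (rule subst_mem)
    obtain c' where c': "(\<Sum>t\<in>?h ` (Gs \<times> S). sc (c' t) t) = (\<Sum>i\<in>Gs \<times> S. sc (d (fst i) (snd i)) (?h i))"
      using RI[of "Gs \<times> S" ?h "\<lambda>i. d (fst i) (snd i)"] Gs(1) S(1) by blast
    show ?thesis using mem unfolding c'[symmetric] by blast
  qed
  have "finite (?h ` (Gs \<times> S))" using Gs(1) S(1) by blast
  then show ?thesis using key by (intro exI[of _ "?h ` (Gs \<times> S)"]) blast
qed

end



lemma subst_mem': "a = b \<Longrightarrow> b \<in> S \<Longrightarrow> a \<in> S" by simp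

locale pm = setting sc G R B for sc :: "'k::field \<Rightarrow> 'a::ring_1 \<Rightarrow> 'a" and G R B +
  fixes m :: "'a set"
  assumes mW: "m \<in> Wset G B"
begin

lemma Nm_0: "0 \<in> Nm m" unfolding Nm_def by (rule addcl.addcl_zero)

lemma Nm_add: "x \<in> Nm m \<Longrightarrow> y \<in> Nm m \<Longrightarrow> x + y \<in> Nm m" unfolding Nm_def by (rule addcl_plus)

lemma Nm_neg: assumes "x \<in> Nm m" shows "- x \<in> Nm m"
  using assms unfolding Nm_def
proof (rule addcl_neg)
  fix y assume "y \<in> {a * x | a x. x \<in> m}"
  then obtain a x where "x \<in> m" "y = a * x" by blast
  then have "- y = (- a) * x" "x \<in> m" by simp_all
  then show "- y \<in> {a * x | a x. x \<in> m}" by blast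
qed

lemma Nm_mult: assumes "x \<in> Nm m" shows "b * x \<in> Nm m"
  using assms unfolding Nm_def
proof (induction rule: addcl.induct)
  case addcl_zero then show ?case by (simp add: addcl.addcl_zero)
next
  case (addcl_add u y)
  then obtain a x where ax: "x \<in> m" "u = a * x" by blast
  then have "b * u = (b * a) * x" by (simp add: mult.assoc)
  then have "b * u \<in> {a * x | a x. x \<in> m}" using ax by blast
  then show ?case using addcl_add(3) by (simp add: distrib_left addcl.addcl_add)
qed

lemma Nm_diff: "x \<in> Nm m \<Longrightarrow> y \<in> Nm m \<Longrightarrow> x - y \<in> Nm m"
  using Nm_add Nm_neg by (metis diff_conv_add_uminus)

lemma amod_ring: "amod (UNIV :: 'a set) (\<lambda>x v. x * v)"
  unfolding amod_def by (simp add: distrib_left distrib_right mult.assoc)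

sublocale P: qm sc G R "UNIV :: 'a set" "Nm m" "\<lambda>x v. x * v"
proof (unfold_locales)
  show "amod (UNIV :: 'a set) (\<lambda>x v. x * v)" by (rule amod_ring)
qed (auto simp: Nm_0 Nm_add Nm_neg Nm_mult)

lemma Psbm: "strong_block_mod sc G R (UNIV :: 'a set) (Nm m) (\<lambda>x v. x * v)"
  using shc Bb mW unfolding strong_HC_block_subalg_def Nm_def by blast

lemma Pbm: "block_mod sc G R (UNIV :: 'a set) (Nm m) (\<lambda>x v. x * v)"
  using Psbm unfolding strong_block_mod_def by (rule conjunct1)

lemma Pstrong: "\<exists>n\<in>Wset G B. \<forall>x\<in>n. \<forall>v\<in>P.V B. x * v \<in> Nm m"
proof -
  have "\<forall>Bk\<in>blocks sc G R. \<exists>n\<in>Wset G Bk. \<forall>x\<in>n. \<forall>v\<in>vsub G UNIV (Nm m) (\<lambda>x v. x * v) Bk. x * v \<in> Nm m"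
    using Psbm unfolding strong_block_mod_def by (rule conjunct2)
  then show ?thesis using Bb by blast
qed

lemma Pdecomp: "\<exists>vB\<in>P.V B. \<exists>ob\<in>P.OB B. v - vB - ob \<in> Nm m"
  using P.decomp[OF Pbm Bb] by blast

lemma nA: assumes n: "n \<in> Wset G B" and st: "\<forall>x\<in>n. \<forall>v\<in>P.V B. x * v \<in> Nm m"
  and y: "y \<in> addcl {x * a | x a. x \<in> n}"
  shows "\<exists>ob\<in>P.OB B. y - ob \<in> Nm m"
  using y
proof (induction rule: addcl.induct)
  case addcl_zero
  have "(0::'a) - 0 \<in> Nm m" using Nm_0 by simp
  then show ?case using P.O_0 by blast
next
  case (addcl_add u y)
  obtain oy where oy: "oy \<in> P.OB B" "y - oy \<in> Nm m" using addcl_add(3) by blast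
  obtain x b where xb: "x \<in> n" "u = x * b" using addcl_add(1) by blast
  have xG: "x \<in> G" using ts_simp(1)[OF W_ts[OF Bcfs n]] xb(1) by blast
  obtain bB ob where bB: "bB \<in> P.V B" "ob \<in> P.OB B" "b - bB - ob \<in> Nm m" using Pdecomp by blast
  have e1: "x * bB \<in> Nm m" using st xb(1) bB(1) by blast
  have e2: "x * (b - bB - ob) \<in> Nm m" using Nm_mult bB(3) by blast
  have e3: "x * ob \<in> P.OB B" using P.O_actG[OF xG bB(2)] by simp
  have "u - x * ob = x * bB + x * (b - bB - ob)" using xb(2) by (simp add: algebra_simps)
  then have "u - x * ob \<in> Nm m" using Nm_add[OF e1 e2] by simp
  then have "(u - x * ob) + (y - oy) \<in> Nm m" using Nm_add oy(2) by blast
  moreover have "(u - x * ob) + (y - oy) = (u + y) - (x * ob + oy)" by (simp add: algebra_simps)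
  moreover have "x * ob + oy \<in> P.OB B" using P.O_add[OF e3 oy(1)] .
  ultimately show ?case by metis
qed

lemma FINP: "\<exists>T. finite T \<and> T \<subseteq> P.V B \<and> (\<forall>a\<in>P.V B. \<exists>c. a - (\<Sum>t\<in>T. sc (c t) t) \<in> Nm m)"
proof -
  obtain n where n: "n \<in> Wset G B" and st: "\<forall>x\<in>n. \<forall>v\<in>P.V B. x * v \<in> Nm m" using Pstrong by blast
  obtain T0 where T0: "finite T0" and T0a: "\<forall>a. \<exists>c. a - (\<Sum>t\<in>T0. sc (c t) t) \<in> two_sided_denom n m"
    using FD[OF n mW] by blast
  have "\<forall>s. \<exists>p. fst p \<in> P.V B \<and> snd p \<in> P.OB B \<and> s - fst p - snd p \<in> Nm m"
  proof
    fix s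
    obtain vB ob where "vB \<in> P.V B" "ob \<in> P.OB B" "s - vB - ob \<in> Nm m" using Pdecomp by blast
    then show "\<exists>p. fst p \<in> P.V B \<and> snd p \<in> P.OB B \<and> s - fst p - snd p \<in> Nm m"
      by (intro exI[of _ "(vB, ob)"]) simp
  qed
  then obtain dd where dd: "\<forall>s. fst (dd s) \<in> P.V B \<and> snd (dd s) \<in> P.OB B \<and> s - fst (dd s) - snd (dd s) \<in> Nm m"
    by (rule choice[THEN exE])
  define \<beta> where "\<beta> s = fst (dd s)" for s
  define ob' where "ob' s = snd (dd s)" for s
  have b1: "\<beta> s \<in> P.V B" and b2: "ob' s \<in> P.OB B" and b3: "s - \<beta> s - ob' s \<in> Nm m" for s
    using dd unfolding \<beta>_def ob'_def by auto
  have key: "\<exists>c. a - (\<Sum>t\<in>\<beta> ` T0. sc (c t) t) \<in> Nm m" if a: "a \<in> P.V B" for a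
  proof -
    obtain c where c: "a - (\<Sum>t\<in>T0. sc (c t) t) \<in> two_sided_denom n m" using T0a by blast
    then obtain y z where yz: "y \<in> addcl {x * a | x a. x \<in> n}" "z \<in> Nm m" "a - (\<Sum>t\<in>T0. sc (c t) t) = y + z"
      unfolding two_sided_denom_def Nm_def using addcl_un by blast
    obtain oy where oy: "oy \<in> P.OB B" "y - oy \<in> Nm m" using nA[OF n st yz(1)] by blast
    let ?D = "a - (\<Sum>t\<in>T0. sc (c t) (\<beta> t))"
    let ?S1 = "\<Sum>t\<in>T0. sc (c t) (t - \<beta> t - ob' t)"
    let ?S2 = "\<Sum>t\<in>T0. sc (c t) (ob' t)"
    have pt: "sc (c t) t = sc (c t) (\<beta> t) + sc (c t) (t - \<beta> t - ob' t) + sc (c t) (ob' t)" for t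
    proof -
      have "t = \<beta> t + (t - \<beta> t - ob' t) + ob' t" by simp
      then have "sc (c t) t = sc (c t) (\<beta> t + (t - \<beta> t - ob' t) + ob' t)" by simp
      then show ?thesis by (simp only: sc_add)
    qed
    have "(\<Sum>t\<in>T0. sc (c t) t) = (\<Sum>t\<in>T0. sc (c t) (\<beta> t)) + ?S1 + ?S2"
      unfolding pt by (simp only: sum.distrib)
    then have Deq: "?D = (y + z) + ?S1 + ?S2" using yz(3) by (simp add: algebra_simps)
    have S1: "?S1 \<in> Nm m"
    proof (rule P.Nsum[OF T0])
      fix t
      have "sc (c t) 1 * (t - \<beta> t - ob' t) \<in> Nm m" using Nm_mult b3 by blast
      then show "sc (c t) (t - \<beta> t - ob' t) \<in> Nm m" using sc_as_mult by metis
    qed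
    have S2: "?S2 \<in> P.OB B"
    proof (rule P.O_sum[OF T0])
      fix t
      have "sc (c t) 1 * ob' t \<in> P.OB B" using P.O_actG[OF Gsc1 b2] by simp
      then show "sc (c t) (ob' t) \<in> P.OB B" using sc_as_mult by metis
    qed
    have DPV: "?D \<in> P.V B"
    proof (rule P.vsub_diff[OF Bcfs a])
      show "(\<Sum>t\<in>T0. sc (c t) (\<beta> t)) \<in> P.V B"
      proof (rule P.vsub_sum[OF T0 Bcfs])
        fix t
        have "sc (c t) 1 * \<beta> t \<in> P.V B" using P.vsub_actG[OF Bcfs Gsc1 b1] by simp
        then show "sc (c t) (\<beta> t) \<in> P.V B" using sc_as_mult by metis
      qed
    qed
    have "?D - (oy + ?S2) = (y - oy) + z + ?S1" unfolding Deq by (simp add: algebra_simps)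
    moreover have "(y - oy) + z + ?S1 \<in> Nm m" using Nm_add oy(2) yz(2) S1 by blast
    ultimately have "?D - (oy + ?S2) \<in> Nm m" by (rule subst_mem')
    moreover have "oy + ?S2 \<in> P.OB B" using P.O_add[OF oy(1) S2] .
    ultimately have "?D \<in> Nm m" using P.SEP[OF Bb DPV] by blast
    moreover obtain c' where "(\<Sum>t\<in>\<beta> ` T0. sc (c' t) t) = (\<Sum>t\<in>T0. sc (c t) (\<beta> t))"
      using RI[OF T0, of \<beta> c] by blast
    ultimately show ?thesis by (intro exI[of _ c']) simp
  qed
  have "finite (\<beta> ` T0)" "\<beta> ` T0 \<subseteq> P.V B" using T0 b1 by auto
  then show ?thesis using key by (intro exI[of _ "\<beta> ` T0"]) blast
qed

end



locale vm = setting sc G R B for sc :: "'k::field \<Rightarrow> 'a::ring_1 \<Rightarrow> 'a" and G R B +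
  fixes M :: "'m::ab_group_add set" and act :: "'a \<Rightarrow> 'm \<Rightarrow> 'm"
  assumes simp_mod: "simple_amod M act"
begin

lemma am_V: "amod M act" using simp_mod unfolding simple_amod_def by blast

lemma M0V: "0 \<in> M" using am_V unfolding amod_def by blast

lemma act0V: "act a 0 = 0"
proof -
  have "act a (0 + 0) = act a 0 + act a 0" using am_V M0V unfolding amod_def by blast
  then show ?thesis by simp
qed

sublocale V: qm sc G R M "{0}" act
  by unfold_locales (auto simp: am_V M0V act0V)

lemma gen: assumes v: "v \<in> M" "v \<noteq> 0" shows "\<forall>u\<in>M. \<exists>a. u = act a v"
proof -
  let ?S = "{act a v | a. True}"
  have SM: "?S \<subseteq> M" using V.Mact[OF v(1)] by blast
  have "act 0 v = 0" using V.act_zl[OF v(1)] .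
  then have S0: "0 \<in> ?S" by (metis (mono_tags, lifting) CollectI)
  have Sadd: "\<forall>x\<in>?S. \<forall>y\<in>?S. x + y \<in> ?S"
  proof (intro ballI)
    fix x y assume "x \<in> ?S" "y \<in> ?S"
    then obtain a b where "x = act a v" "y = act b v" by blast
    then have "x + y = act (a + b) v" using V.act_addl[OF v(1)] by simp
    then show "x + y \<in> ?S" by blast
  qed
  have Sneg: "\<forall>x\<in>?S. - x \<in> ?S"
  proof
    fix x assume "x \<in> ?S"
    then obtain a where "x = act a v" by blast
    then have "- x = act (- a) v" using V.act_negl[OF v(1)] by simp
    then show "- x \<in> ?S" by blast
  qed
  have Sact: "\<forall>b. \<forall>x\<in>?S. act b x \<in> ?S"
  proof (intro allI ballI)
    fix b x assume "x \<in> ?S"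
    then obtain a where "x = act a v" by blast
    then have "act b x = act (b * a) v" using V.act_mult[OF v(1)] by simp
    then show "act b x \<in> ?S" by blast
  qed
  have "?S = {0} \<or> ?S = M"
    using simp_mod SM S0 Sadd Sneg Sact unfolding simple_amod_def by blast
  moreover have "v \<in> ?S" using V.act_one[OF v(1)] by (metis (mono_tags, lifting) CollectI)
  ultimately have "?S = M" using v(2) by blast
  then show ?thesis by blast
qed

lemma RIV: assumes "finite T" "\<And>t. t \<in> T \<Longrightarrow> h t \<in> M"
  shows "\<exists>c'. (\<Sum>s\<in>h ` T. act (sc (c' s) 1) s) = (\<Sum>t\<in>T. act (sc (c t) 1) (h t))"
proof -
  have "(\<Sum>t\<in>T. act (sc (c t) 1) (h t)) = (\<Sum>s\<in>h ` T. \<Sum>t\<in>{t. t \<in> T \<and> h t = s}. act (sc (c t) 1) (h t))"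
    by (rule sum.image_gen[OF assms(1)])
  also have "\<dots> = (\<Sum>s\<in>h ` T. \<Sum>t\<in>{t. t \<in> T \<and> h t = s}. act (sc (c t) 1) s)"
    by (rule sum.cong) auto
  also have "\<dots> = (\<Sum>s\<in>h ` T. act (sc (\<Sum>t\<in>{t. t \<in> T \<and> h t = s}. c t) 1) s)"
  proof (rule sum.cong[OF refl])
    fix s assume s: "s \<in> h ` T"
    then have sM: "s \<in> M" using assms(2) by blast
    have fin: "finite {t. t \<in> T \<and> h t = s}" using assms(1) by simp
    have "act (sc (\<Sum>t\<in>{t. t \<in> T \<and> h t = s}. c t) 1) s = act (\<Sum>t\<in>{t. t \<in> T \<and> h t = s}. sc (c t) 1) s"
      by (simp add: vs.scale_sum_left)
    also have "\<dots> = (\<Sum>t\<in>{t. t \<in> T \<and> h t = s}. act (sc (c t) 1) s)"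
      using V.act_suml[OF fin sM] .
    finally show "(\<Sum>t\<in>{t. t \<in> T \<and> h t = s}. act (sc (c t) 1) s) = act (sc (\<Sum>t\<in>{t. t \<in> T \<and> h t = s}. c t) 1) s"
      by simp
  qed
  finally show ?thesis by (intro exI[of _ "\<lambda>s. \<Sum>t\<in>{t. t \<in> T \<and> h t = s}. c t"]) simp
qed

end

locale vpm = vm sc G R B M act + pm sc G R B m
  for sc :: "'k::field \<Rightarrow> 'a::ring_1 \<Rightarrow> 'a" and G R B M act m
begin

lemma phiN: assumes v: "v \<in> M" "\<forall>x\<in>m. act x v = 0" and z: "z \<in> Nm m" shows "act z v = 0"
  using z unfolding Nm_def
proof (induction rule: addcl.induct)
  case addcl_zero then show ?case using V.act_zl[OF v(1)] by simp
next
  case (addcl_add u y)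
  then obtain a x where ax: "x \<in> m" "u = a * x" by blast
  have "act u v = act a (act x v)" using ax(2) V.act_mult[OF v(1)] by simp
  also have "\<dots> = 0" using v(2) ax(1) V.act_zr by simp
  finally show ?case using addcl_add(3) V.act_addl[OF v(1)] by simp
qed

lemma phiV: assumes v: "v \<in> M" "\<forall>x\<in>m. act x v = 0" and y: "y \<in> P.V Bk" shows "act y v \<in> V.V Bk"
proof -
  obtain k where k: "k \<in> Wset G Bk" "\<forall>x\<in>k. x * y \<in> Nm m" using y unfolding vsub_def by auto
  have "\<forall>x\<in>k. act x (act y v) \<in> {0}"
  proof
    fix x assume "x \<in> k"
    then have "act (x * y) v = 0" using phiN[OF v] k(2) by blast
    then show "act x (act y v) \<in> {0}" using V.act_mult[OF v(1)] by simp
  qed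
  then show ?thesis unfolding vsub_def using k(1) V.Mact[OF v(1)] by blast
qed

lemma phiO: assumes v: "v \<in> M" "\<forall>x\<in>m. act x v = 0" and y: "y \<in> P.OB B" shows "act y v \<in> V.OB B"
  using y
proof (induction rule: addcl.induct)
  case addcl_zero then show ?case using V.act_zl[OF v(1)] V.O_0 by simp
next
  case (addcl_add u y)
  obtain Bk where Bk: "Bk \<in> blocks sc G R" "Bk \<noteq> B" "u \<in> P.V Bk" using addcl_add(1) unfolding P.others_def by blast
  have "act u v \<in> V.OB B" using V.O_base[OF Bk(1,2) phiV[OF v Bk(3)]] .
  then have "act u v + act y v \<in> V.OB B" using V.O_add addcl_add(3) by blast
  then show ?case using V.act_addl[OF v(1)] by simp
qed

lemma projV: assumes v: "v \<in> M" "\<forall>x\<in>m. act x v = 0" and u: "u \<in> V.V B" "u = act a v"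
  and aB: "aB \<in> P.V B" "ob \<in> P.OB B" "a - aB - ob \<in> Nm m"
  shows "u = act aB v"
proof -
  have "act a v = act aB v + act ob v + act (a - aB - ob) v"
    using V.act_addl[OF v(1)] by (metis diff_add_cancel add.commute add.left_commute)
  then have e: "act a v = act aB v + act ob v" using phiN[OF v aB(3)] by simp
  have uB: "u - act aB v \<in> V.V B" using V.vsub_diff[OF Bcfs u(1) phiV[OF v aB(1)]] .
  have "(u - act aB v) - act ob v = 0" using u(2) e by simp
  then have "u - act aB v \<in> {0}" using V.SEP[OF Bb uB phiO[OF v aB(2)]] by simp
  then show ?thesis by simp
qed

end

context vm
begin

lemma partii: "fin_dim sc act (V.V B)"
proof (cases "V.V B \<subseteq> {0}")
  case True
  then show ?thesis unfolding fin_dim_def by (intro exI[of _ "{}"]) auto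
next
  case False
  then obtain v where vB: "v \<in> V.V B" "v \<noteq> 0" by blast
  then obtain m where m: "m \<in> Wset G B" "\<forall>x\<in>m. act x v = 0" and vM: "v \<in> M"
    unfolding vsub_def by auto
  interpret vpm sc G R B M act m by unfold_locales (rule m(1))
  obtain T where T: "finite T" "T \<subseteq> P.V B" and Ta: "\<forall>a\<in>P.V B. \<exists>c. a - (\<Sum>t\<in>T. sc (c t) t) \<in> Nm m"
    using FINP by blast
  have hM: "act t v \<in> M" for t using V.Mact[OF vM] .
  have key: "\<exists>c. u = (\<Sum>s\<in>(\<lambda>t. act t v) ` T. act (sc (c s) 1) s)" if u: "u \<in> V.V B" for u
  proof -
    have uM: "u \<in> M" using u V.vsub_M by blast
    obtain a where a: "u = act a v" using gen[OF vM vB(2)] uM by blast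
    obtain aB ob where aB: "aB \<in> P.V B" "ob \<in> P.OB B" "a - aB - ob \<in> Nm m" using Pdecomp by blast
    have u1: "u = act aB v" using projV[OF vM m(2) u a aB] .
    obtain c where c: "aB - (\<Sum>t\<in>T. sc (c t) t) \<in> Nm m" using Ta aB(1) by blast
    have "act (aB - (\<Sum>t\<in>T. sc (c t) t)) v = 0" using phiN[OF vM m(2) c] .
    then have "act aB v = act (\<Sum>t\<in>T. sc (c t) t) v" using V.act_diffl[OF vM] by simp
    also have "\<dots> = (\<Sum>t\<in>T. act (sc (c t) t) v)" using V.act_suml[OF T(1) vM] .
    also have "\<dots> = (\<Sum>t\<in>T. act (sc (c t) 1) (act t v))"
    proof (rule sum.cong[OF refl])
      fix t show "act (sc (c t) t) v = act (sc (c t) 1) (act t v)"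
        using V.act_mult[OF vM, of "sc (c t) 1" t] sc_as_mult[of "c t" t] by simp
    qed
    finally have "u = (\<Sum>t\<in>T. act (sc (c t) 1) (act t v))" using u1 by simp
    moreover obtain c' where "(\<Sum>s\<in>(\<lambda>t. act t v) ` T. act (sc (c' s) 1) s) = (\<Sum>t\<in>T. act (sc (c t) 1) (act t v))"
      using RIV[OF T(1), of "\<lambda>t. act t v" c] hM by blast
    ultimately show ?thesis by (intro exI[of _ c']) simp
  qed
  have "(\<lambda>t. act t v) ` T \<subseteq> V.V B" using phiV[OF vM m(2)] T(2) by blast
  moreover have "finite ((\<lambda>t. act t v) ` T)" using T(1) by blast
  ultimately show ?thesis unfolding fin_dim_def using key by (intro exI[of _ "(\<lambda>t. act t v) ` T"]) blast
qed

end



lemma amod_facts: assumes "amod M act" "v \<in> M"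
  shows "act (a + b) v = act a v + act b v" "act (a * b) v = act a (act b v)" "act a v \<in> M"
    "act 1 v = v"
  using assms unfolding amod_def by blast+

lemma amod_zero: assumes "amod M act" "v \<in> M" shows "act 0 v = 0"
  using amod_facts(1)[OF assms, of 0 0] by simp

lemma amod_diff: assumes "amod M act" "v \<in> M" shows "act (a - b) v = act a v - act b v"
proof -
  have "act (b + (a - b)) v = act b v + act (a - b) v" using amod_facts(1)[OF assms] .
  then show ?thesis by (simp add: algebra_simps)
qed

lemma iso: assumes am1: "amod M1 act1" and am2: "amod M2 act2" and v1: "v1 \<in> M1" and v2: "v2 \<in> M2"
  and g1: "\<forall>u\<in>M1. \<exists>a. u = act1 a v1" and g2: "\<forall>u\<in>M2. \<exists>a. u = act2 a v2"
  and ann: "\<forall>a. act1 a v1 = 0 \<longleftrightarrow> act2 a v2 = 0"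
  shows "amod_iso M1 act1 M2 act2"
proof -
  have tr: "act2 a v2 = act2 b v2" if "act1 a v1 = act1 b v1" for a b
  proof -
    have "act1 (a - b) v1 = 0" using that amod_diff[OF am1 v1] by simp
    then have "act2 (a - b) v2 = 0" using ann by blast
    then show ?thesis using amod_diff[OF am2 v2] by simp
  qed
  have tr2: "act1 a v1 = act1 b v1" if "act2 a v2 = act2 b v2" for a b
  proof -
    have "act2 (a - b) v2 = 0" using that amod_diff[OF am2 v2] by simp
    then have "act1 (a - b) v1 = 0" using ann by blast
    then show ?thesis using amod_diff[OF am1 v1] by simp
  qed
  define f where "f u = act2 (SOME a. u = act1 a v1) v2" for u
  have fe: "f (act1 a v1) = act2 a v2" for a
  proof -
    define a' where "a' = (SOME a'. act1 a v1 = act1 a' v1)"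
    have "act1 a v1 = act1 a' v1" unfolding a'_def by (rule someI[of _ a]) (rule refl)
    then have "act2 a v2 = act2 a' v2" by (rule tr)
    then have "act2 a' v2 = act2 a v2" by simp
    moreover have "f (act1 a v1) = act2 a' v2" unfolding f_def a'_def by simp
    ultimately show ?thesis by simp
  qed
  have inj: "inj_on f M1"
  proof (rule inj_onI)
    fix u u' assume u: "u \<in> M1" "u' \<in> M1" "f u = f u'"
    obtain a where a: "u = act1 a v1" using g1 u(1) by blast
    obtain b where b: "u' = act1 b v1" using g1 u(2) by blast
    have "act2 a v2 = act2 b v2" using u(3) fe[of a] fe[of b] a b by simp
    then have "act1 a v1 = act1 b v1" by (rule tr2)
    then show "u = u'" using a b by simp
  qed
  have img: "f ` M1 = M2"
  proof
    show "f ` M1 \<subseteq> M2"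
    proof
      fix y assume "y \<in> f ` M1"
      then obtain u where u: "u \<in> M1" "y = f u" by blast
      obtain a where "u = act1 a v1" using g1 u(1) by blast
      then show "y \<in> M2" using u(2) fe amod_facts(3)[OF am2 v2] by simp
    qed
    show "M2 \<subseteq> f ` M1"
    proof
      fix y assume "y \<in> M2"
      then obtain a where a: "y = act2 a v2" using g2 by blast
      have "act1 a v1 \<in> M1" using amod_facts(3)[OF am1 v1] .
      moreover have "f (act1 a v1) = y" using fe a by simp
      ultimately show "y \<in> f ` M1" by blast
    qed
  qed
  have add: "\<forall>u\<in>M1. \<forall>u'\<in>M1. f (u + u') = f u + f u'"
  proof (intro ballI)
    fix u u' assume u: "u \<in> M1" "u' \<in> M1"
    obtain a where a: "u = act1 a v1" using g1 u(1) by blast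
    obtain b where b: "u' = act1 b v1" using g1 u(2) by blast
    have "u + u' = act1 (a + b) v1" using a b amod_facts(1)[OF am1 v1] by simp
    then show "f (u + u') = f u + f u'" using fe a b amod_facts(1)[OF am2 v2] by simp
  qed
  have eqv: "\<forall>c. \<forall>u\<in>M1. f (act1 c u) = act2 c (f u)"
  proof (intro allI ballI)
    fix c u assume u: "u \<in> M1"
    obtain a where a: "u = act1 a v1" using g1 u by blast
    have "act1 c u = act1 (c * a) v1" using a amod_facts(2)[OF am1 v1] by simp
    then show "f (act1 c u) = act2 c (f u)" using fe a amod_facts(2)[OF am2 v2] by simp
  qed
  have "bij_betw f M1 M2" unfolding bij_betw_def using inj img by blast
  then show ?thesis unfolding amod_iso_def using add eqv by (intro exI[of _ f] conjI)
qed

context base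
begin

lemma DIMSTRICT: assumes W: "finite W" and U1: "vs.subspace U1" and U2: "vs.subspace U2"
  and ss: "U1 \<subset> U2" and sp: "U2 \<subseteq> vs.span W"
  shows "vs.dim U1 < vs.dim U2"
proof -
  obtain B1 where B1: "B1 \<subseteq> U1" "vs.independent B1" "U1 \<subseteq> vs.span B1" "card B1 = vs.dim U1"
    using vs.basis_exists by blast
  obtain B2 where B2: "B2 \<subseteq> U2" "vs.independent B2" "U2 \<subseteq> vs.span B2" "card B2 = vs.dim U2"
    using vs.basis_exists by blast
  obtain x where x: "x \<in> U2" "x \<notin> U1" using ss by blast
  have "vs.span B1 \<subseteq> U1" using vs.span_minimal[OF B1(1) U1] .
  then have xs: "x \<notin> vs.span B1" using x by blast
  have ind: "vs.independent (insert x B1)" using vs.independent_insertI[OF xs B1(2)] .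
  have "B2 \<subseteq> vs.span W" using B2(1) sp by blast
  then have fB2: "finite B2" using vs.independent_span_bound[OF W B2(2)] by simp
  have "insert x B1 \<subseteq> vs.span B2" using x(1) B1(1) ss B2(3) by blast
  then have b: "finite (insert x B1) \<and> card (insert x B1) \<le> card B2"
    by (rule vs.independent_span_bound[OF fB2 ind])
  have "x \<notin> B1" using x(2) B1(1) by blast
  then have "card (insert x B1) = Suc (card B1)" using b by simp
  then show ?thesis using b B1(4) B2(4) by simp
qed

end



context pm
begin

definition lid :: "'a set \<Rightarrow> bool" where
  "lid L \<longleftrightarrow> 0 \<in> L \<and> (\<forall>x\<in>L. \<forall>y\<in>L. x + y \<in> L) \<and> (\<forall>x\<in>L. - x \<in> L) \<and> (\<forall>a. \<forall>x\<in>L. a * x \<in> L) \<and> Nm m \<subseteq> L"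

lemma lid0: "lid L \<Longrightarrow> 0 \<in> L" and lid_add: "lid L \<Longrightarrow> x \<in> L \<Longrightarrow> y \<in> L \<Longrightarrow> x + y \<in> L"
  and lid_neg: "lid L \<Longrightarrow> x \<in> L \<Longrightarrow> - x \<in> L" and lid_mult: "lid L \<Longrightarrow> x \<in> L \<Longrightarrow> a * x \<in> L"
  and lid_Nm: "lid L \<Longrightarrow> Nm m \<subseteq> L"
  unfolding lid_def by blast+

lemma lid_diff: "lid L \<Longrightarrow> x \<in> L \<Longrightarrow> y \<in> L \<Longrightarrow> x - y \<in> L"
  using lid_add lid_neg by (metis diff_conv_add_uminus)

lemma lid_UNIV: "lid UNIV" unfolding lid_def by blast

lemma lid_Nmm: "lid (Nm m)" unfolding lid_def using Nm_0 Nm_add Nm_neg Nm_mult by blast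

lemma lid_int: "lid K1 \<Longrightarrow> lid K2 \<Longrightarrow> lid (K1 \<inter> K2)" unfolding lid_def by blast

lemma lid_sub: assumes "lid L" shows "vs.subspace L"
  unfolding vs.subspace_def
proof (intro conjI ballI allI)
  show "0 \<in> L" using lid0[OF assms] .
  show "x + y \<in> L" if "x \<in> L" "y \<in> L" for x y using lid_add[OF assms that] .
  show "sc c x \<in> L" if "x \<in> L" for c x using lid_mult[OF assms that, of "sc c 1"] sc_as_mult[of c x] by simp
qed

definition TT where "TT = (SOME T. finite T \<and> T \<subseteq> P.V B \<and> (\<forall>a\<in>P.V B. \<exists>c. a - (\<Sum>t\<in>T. sc (c t) t) \<in> Nm m))"

lemma TT: "finite TT" "TT \<subseteq> P.V B" "\<forall>a\<in>P.V B. \<exists>c. a - (\<Sum>t\<in>TT. sc (c t) t) \<in> Nm m"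
  using someI_ex[OF FINP] unfolding TT_def[symmetric] by blast+

definition mu where "mu L = vs.dim (vs.span TT \<inter> L)"

definition Bmin where "Bmin X Y \<longleftrightarrow> (\<forall>K. lid K \<and> X \<subseteq> K \<and> K \<subseteq> Y \<longrightarrow> K \<inter> P.V B = X \<inter> P.V B \<or> K \<inter> P.V B = Y \<inter> P.V B)"

lemma MU: assumes X: "lid X" and Y: "lid Y" and XY: "X \<subseteq> Y" and ne: "X \<inter> P.V B \<noteq> Y \<inter> P.V B"
  shows "mu X < mu Y"
proof -
  obtain a where a: "a \<in> Y" "a \<in> P.V B" "a \<notin> X" using XY ne by blast
  obtain c where c: "a - (\<Sum>t\<in>TT. sc (c t) t) \<in> Nm m" using TT(3) a(2) by blast
  let ?t = "\<Sum>t\<in>TT. sc (c t) t"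
  have ts: "?t \<in> vs.span TT" by (intro vs.span_sum vs.span_scale vs.span_base)
  have "a - (a - ?t) \<in> Y" using lid_diff[OF Y a(1)] c lid_Nm[OF Y] by blast
  then have tY: "?t \<in> Y" by simp
  have tX: "?t \<notin> X"
  proof
    assume "?t \<in> X"
    then have "(a - ?t) + ?t \<in> X" using lid_add[OF X] c lid_Nm[OF X] by blast
    then show False using a(3) by simp
  qed
  have "vs.span TT \<inter> X \<subset> vs.span TT \<inter> Y" using XY ts tY tX by blast
  moreover have "vs.subspace (vs.span TT \<inter> X)" using vs.subspace_inter[OF vs.subspace_span lid_sub[OF X]] .
  moreover have "vs.subspace (vs.span TT \<inter> Y)" using vs.subspace_inter[OF vs.subspace_span lid_sub[OF Y]] .
  moreover have "vs.span TT \<inter> Y \<subseteq> vs.span TT" by blast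
  ultimately show ?thesis unfolding mu_def using DIMSTRICT[OF TT(1)] by blast
qed

lemma CH: "lid X \<Longrightarrow> lid Y \<Longrightarrow> X \<subseteq> Y \<Longrightarrow>
  \<exists>r c. c 0 = X \<and> c r = Y \<and> (\<forall>j\<le>r. lid (c j)) \<and> (\<forall>j<r. c j \<subseteq> c (Suc j) \<and> Bmin (c j) (c (Suc j)))"
proof (induction "mu Y - mu X" arbitrary: X Y rule: less_induct)
  case less
  show ?case
  proof (cases "Bmin X Y")
    case True
    let ?c = "\<lambda>j::nat. if j = 0 then X else Y"
    have a1: "\<forall>j\<le>1. lid (?c j)"
    proof (intro allI impI)
      fix j :: nat assume "j \<le> 1"
      show "lid (?c j)" using less.prems(1,2) by (cases "j = 0") simp_all
    qed
    have a2: "\<forall>j<1. ?c j \<subseteq> ?c (Suc j) \<and> Bmin (?c j) (?c (Suc j))"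
    proof (intro allI impI)
      fix j :: nat assume "j < 1"
      then have "j = 0" by simp
      then show "?c j \<subseteq> ?c (Suc j) \<and> Bmin (?c j) (?c (Suc j))" using less.prems(3) True by simp
    qed
    have "?c 0 = X" "?c 1 = Y" by simp_all
    then show ?thesis using a1 a2 by (intro exI[of _ 1] exI[of _ ?c]) simp
  next
    case False
    have "\<exists>K. lid K \<and> X \<subseteq> K \<and> K \<subseteq> Y \<and> K \<inter> P.V B \<noteq> X \<inter> P.V B \<and> K \<inter> P.V B \<noteq> Y \<inter> P.V B"
      using False unfolding Bmin_def by blast
    then obtain K where K: "lid K" "X \<subseteq> K" "K \<subseteq> Y" "K \<inter> P.V B \<noteq> X \<inter> P.V B" "K \<inter> P.V B \<noteq> Y \<inter> P.V B"
      by blast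
    have m1: "mu X < mu K" using MU[OF less.prems(1) K(1) K(2)] K(4) by metis
    have m2: "mu K < mu Y" using MU[OF K(1) less.prems(2) K(3) K(5)] .
    have "mu K - mu X < mu Y - mu X" using m1 m2 by linarith
    then obtain r1 c1 where c1: "c1 0 = X" "c1 r1 = K" "\<forall>j\<le>r1. lid (c1 j)"
        "\<forall>j<r1. c1 j \<subseteq> c1 (Suc j) \<and> Bmin (c1 j) (c1 (Suc j))"
      using less.hyps[OF _ less.prems(1) K(1) K(2)] by blast
    have "mu Y - mu K < mu Y - mu X" using m1 m2 by linarith
    then obtain r2 c2 where c2: "c2 0 = K" "c2 r2 = Y" "\<forall>j\<le>r2. lid (c2 j)"
        "\<forall>j<r2. c2 j \<subseteq> c2 (Suc j) \<and> Bmin (c2 j) (c2 (Suc j))"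
      using less.hyps[OF _ K(1) less.prems(2) K(3)] by blast
    have r2: "r2 \<noteq> 0"
    proof
      assume "r2 = 0" then have "K = Y" using c2(1,2) by simp
      then show False using K(5) by simp
    qed
    define c where "c j = (if j < r1 then c1 j else c2 (j - r1))" for j
    have cj: "c j = (if j \<le> r1 then c1 j else c2 (j - r1))" for j
    proof (cases "j = r1")
      case True then show ?thesis unfolding c_def using c1(2) c2(1) by simp
    next
      case False then show ?thesis unfolding c_def by simp
    qed
    have "c 0 = X" using cj[of 0] c1(1) by simp
    moreover have "c (r1 + r2) = Y" unfolding c_def using c2(2) by simp
    moreover have "\<forall>j\<le>r1 + r2. lid (c j)"
    proof (intro allI impI)
      fix j assume j: "j \<le> r1 + r2"
      show "lid (c j)"
      proof (cases "j < r1")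
        case True then show ?thesis unfolding c_def using c1(3) by simp
      next
        case False then show ?thesis unfolding c_def using c2(3) j by simp
      qed
    qed
    moreover have "\<forall>j<r1 + r2. c j \<subseteq> c (Suc j) \<and> Bmin (c j) (c (Suc j))"
    proof (intro allI impI)
      fix j assume j: "j < r1 + r2"
      show "c j \<subseteq> c (Suc j) \<and> Bmin (c j) (c (Suc j))"
      proof (cases "j < r1")
        case True
        then have "c j = c1 j" "c (Suc j) = c1 (Suc j)" using cj[of j] cj[of "Suc j"] by auto
        then show ?thesis using c1(4) True by simp
      next
        case False
        then have "c j = c2 (j - r1)" "c (Suc j) = c2 (Suc (j - r1))" unfolding c_def using Suc_diff_le[of r1 j] by auto
        moreover have "j - r1 < r2" using j False by linarith
        ultimately show ?thesis using c2(4) by simp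
      qed
    qed
    ultimately show ?thesis by (intro exI[of _ "r1 + r2"] exI[of _ c]) simp
  qed
qed

lemma BC: assumes L: "lid L" and z: "z \<in> L" and zB: "zB \<in> P.V B" and ob: "ob \<in> P.OB B"
  and d: "z - zB - ob \<in> Nm m"
  shows "zB \<in> L"
proof -
  obtain k where k: "k \<in> Wset G B" "\<forall>x\<in>k. x * zB \<in> Nm m" using zB unfolding vsub_def by auto
  obtain g where g: "g \<in> G" "1 - g \<in> k" "g * ob \<in> Nm m" using P.SEPg[OF Bb ob k(1)] by auto
  have e: "zB = (1 - g) * zB + g * z - g * ob - g * (z - zB - ob)" by (simp add: algebra_simps)
  have n1: "(1 - g) * zB \<in> L" using k(2) g(2) lid_Nm[OF L] by blast
  have n2: "g * z \<in> L" using lid_mult[OF L z] .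
  have n3: "g * ob \<in> L" using g(3) lid_Nm[OF L] by blast
  have n4: "g * (z - zB - ob) \<in> L" using Nm_mult[OF d] lid_Nm[OF L] by blast
  have "(1 - g) * zB + g * z - g * ob - g * (z - zB - ob) \<in> L"
    using lid_diff[OF L lid_diff[OF L lid_add[OF L n1 n2] n3] n4] .
  then show ?thesis using e by simp
qed

lemma c_abs: assumes L': "lid L'" and L: "lid L" and K1: "lid K1" and K2: "lid K2"
  and s1: "L' \<subseteq> K1" "K1 \<subseteq> L" and s2: "L' \<subseteq> K2" "K2 \<subseteq> L"
  and b1: "K1 \<inter> P.V B = L' \<inter> P.V B" and b2: "K2 \<inter> P.V B = L' \<inter> P.V B"
  and mx: "\<forall>K. lid K \<and> K1 \<subseteq> K \<and> K \<subseteq> L \<and> \<not> K \<subseteq> K1 \<longrightarrow> L \<subseteq> K"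
  and y: "y \<in> L" "y \<in> P.V B" "y \<notin> K1"
  shows "K2 \<subseteq> K1"
proof (rule ccontr)
  assume nK: "\<not> K2 \<subseteq> K1"
  let ?K = "{k1 + k2 | k1 k2. k1 \<in> K1 \<and> k2 \<in> K2}"
  have lK: "lid ?K" unfolding lid_def
  proof (intro conjI ballI allI)
    have "(0::'a) = 0 + 0" by simp
    then show "0 \<in> ?K" using lid0[OF K1] lid0[OF K2] by blast
    fix x assume "x \<in> ?K"
    then obtain a b where ab: "a \<in> K1" "b \<in> K2" "x = a + b" by blast
    {
      fix y assume "y \<in> ?K"
      then obtain c d where cd: "c \<in> K1" "d \<in> K2" "y = c + d" by blast
      have "x + y = (a + c) + (b + d)" using ab cd by (simp add: algebra_simps)
      moreover have "a + c \<in> K1" "b + d \<in> K2" using lid_add[OF K1 ab(1) cd(1)] lid_add[OF K2 ab(2) cd(2)] by auto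
      ultimately show "x + y \<in> ?K" by blast
    }
    have "- x = (- a) + (- b)" using ab by simp
    moreover have "- a \<in> K1" "- b \<in> K2" using lid_neg[OF K1 ab(1)] lid_neg[OF K2 ab(2)] by auto
    ultimately show "- x \<in> ?K" by blast
    fix c
    have "c * x = c * a + c * b" using ab by (simp add: distrib_left)
    moreover have "c * a \<in> K1" "c * b \<in> K2" using lid_mult[OF K1 ab(1)] lid_mult[OF K2 ab(2)] by auto
    ultimately show "c * x \<in> ?K" by blast
  next
    show "Nm m \<subseteq> ?K"
    proof
      fix x assume "x \<in> Nm m"
      then have "x \<in> K1" using lid_Nm[OF K1] by blast
      moreover have "x = x + 0" by simp
      ultimately show "x \<in> ?K" using lid0[OF K2] by blast
    qed
  qed
  have K1K: "K1 \<subseteq> ?K"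
  proof
    fix x assume "x \<in> K1"
    moreover have "x = x + 0" by simp
    ultimately show "x \<in> ?K" using lid0[OF K2] by blast
  qed
  have KL: "?K \<subseteq> L"
  proof
    fix x assume "x \<in> ?K"
    then obtain a b where "a \<in> K1" "b \<in> K2" "x = a + b" by blast
    then show "x \<in> L" using lid_add[OF L] s1(2) s2(2) by blast
  qed
  have "\<not> ?K \<subseteq> K1"
  proof
    assume a: "?K \<subseteq> K1"
    have "K2 \<subseteq> ?K"
    proof
      fix x assume "x \<in> K2"
      moreover have "x = 0 + x" by simp
      ultimately show "x \<in> ?K" using lid0[OF K1] by blast
    qed
    then show False using a nK by blast
  qed
  then have "L \<subseteq> ?K" using mx lK K1K KL by blast
  then obtain k1 k2 where kk: "k1 \<in> K1" "k2 \<in> K2" "y = k1 + k2" using y(1) by blast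
  obtain k1B o1 where d1: "k1B \<in> P.V B" "o1 \<in> P.OB B" "k1 - k1B - o1 \<in> Nm m" using Pdecomp by blast
  obtain k2B o2 where d2: "k2B \<in> P.V B" "o2 \<in> P.OB B" "k2 - k2B - o2 \<in> Nm m" using Pdecomp by blast
  have "k1B \<in> K1" using BC[OF K1 kk(1) d1] .
  then have k1L: "k1B \<in> L'" using b1 d1(1) by blast
  have "k2B \<in> K2" using BC[OF K2 kk(2) d2] .
  then have k2L: "k2B \<in> L'" using b2 d2(1) by blast
  have DB: "y - k1B - k2B \<in> P.V B" using P.vsub_diff[OF Bcfs P.vsub_diff[OF Bcfs y(2) d1(1)] d2(1)] .
  have "(y - k1B - k2B) - (o1 + o2) = (k1 - k1B - o1) + (k2 - k2B - o2)" using kk(3) by (simp add: algebra_simps)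
  moreover have "(k1 - k1B - o1) + (k2 - k2B - o2) \<in> Nm m" using Nm_add d1(3) d2(3) by blast
  ultimately have "(y - k1B - k2B) - (o1 + o2) \<in> Nm m" by (rule subst_mem')
  moreover have "o1 + o2 \<in> P.OB B" using P.O_add[OF d1(2) d2(2)] .
  ultimately have "y - k1B - k2B \<in> Nm m" using P.SEP[OF Bb DB] by blast
  then have "y - k1B - k2B \<in> L'" using lid_Nm[OF L'] by blast
  then have "(y - k1B - k2B) + k1B + k2B \<in> L'" using lid_add[OF L'] k1L k2L by blast
  then have "y \<in> L'" by simp
  then show False using y(3) s1(1) by blast
qed

end



context vpm
begin

lemma lid_Kw: assumes w: "w \<in> M" "\<forall>x\<in>m. act x w = 0" shows "lid {a. act a w = 0}"
  unfolding lid_def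
proof (intro conjI ballI allI)
  show "0 \<in> {a. act a w = 0}" using V.act_zl[OF w(1)] by simp
  show "x + y \<in> {a. act a w = 0}" if "x \<in> {a. act a w = 0}" "y \<in> {a. act a w = 0}" for x y
    using that V.act_addl[OF w(1)] by simp
  show "- x \<in> {a. act a w = 0}" if "x \<in> {a. act a w = 0}" for x
    using that V.act_negl[OF w(1)] by simp
  show "a * x \<in> {a. act a w = 0}" if "x \<in> {a. act a w = 0}" for a x
    using that V.act_mult[OF w(1)] V.act_zr by simp
  show "Nm m \<subseteq> {a. act a w = 0}" using phiN[OF w] by blast
qed

lemma a': assumes w: "w \<in> M" "\<forall>x\<in>m. act x w = 0" and u: "u \<in> V.V B" "u \<noteq> 0"
  and L: "lid L" and x: "x \<in> L" "act x w \<noteq> 0"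
  shows "\<exists>y. y \<in> L \<and> y \<in> P.V B \<and> act y w \<noteq> 0"
proof -
  have vM: "act x w \<in> M" using V.Mact[OF w(1)] .
  have uM: "u \<in> M" using u(1) V.vsub_M by blast
  obtain b where b: "u = act b (act x w)" using gen[OF vM x(2)] uM by blast
  then have b': "u = act (b * x) w" using V.act_mult[OF w(1)] by simp
  have bx: "b * x \<in> L" using lid_mult[OF L x(1)] .
  obtain yB ob where d: "yB \<in> P.V B" "ob \<in> P.OB B" "b * x - yB - ob \<in> Nm m" using Pdecomp by blast
  have yL: "yB \<in> L" using BC[OF L bx d] .
  have "u = act yB w" using projV[OF w u(1) b' d] .
  then show ?thesis using yL d(1) u(2) by blast
qed

lemma a: assumes w: "w \<in> M" "\<forall>x\<in>m. act x w = 0" and u: "u \<in> V.V B" "u \<noteq> 0"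
  and L': "lid L'" and L: "lid L" and s: "L' \<subseteq> L" "L' \<subseteq> {a. act a w = 0}"
  and x: "x \<in> L" "act x w \<noteq> 0" and bm: "Bmin L' L"
  shows "({a. act a w = 0} \<inter> L) \<inter> P.V B = L' \<inter> P.V B"
proof -
  let ?K = "{a. act a w = 0} \<inter> L"
  have lK: "lid ?K" using lid_int[OF lid_Kw[OF w] L] .
  have "L' \<subseteq> ?K" "?K \<subseteq> L" using s by auto
  then have or: "?K \<inter> P.V B = L' \<inter> P.V B \<or> ?K \<inter> P.V B = L \<inter> P.V B" using bm lK unfolding Bmin_def by blast
  obtain y where y: "y \<in> L" "y \<in> P.V B" "act y w \<noteq> 0" using a'[OF w u L x] by blast
  have "y \<notin> ?K" using y(3) by blast
  then have "?K \<inter> P.V B \<noteq> L \<inter> P.V B" using y(1,2) by blast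
  then show ?thesis using or by blast
qed

lemma b: assumes w: "w \<in> M" "\<forall>x\<in>m. act x w = 0"
  and L: "lid L" and K: "lid K" and s: "{a. act a w = 0} \<inter> L \<subseteq> K" "K \<subseteq> L" and n: "\<not> K \<subseteq> {a. act a w = 0} \<inter> L"
  shows "L \<subseteq> K"
proof
  obtain k where k: "k \<in> K" "act k w \<noteq> 0" using n s(2) by blast
  have kL: "k \<in> L" using k(1) s(2) by blast
  have vM: "act k w \<in> M" using V.Mact[OF w(1)] .
  fix y assume y: "y \<in> L"
  have "act y w \<in> M" using V.Mact[OF w(1)] .
  then obtain b where "act y w = act b (act k w)" using gen[OF vM k(2)] by blast
  then have "act y w = act (b * k) w" using V.act_mult[OF w(1)] by simp
  then have "act (y - b * k) w = 0" using V.act_diffl[OF w(1)] by simp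
  moreover have "y - b * k \<in> L" using lid_diff[OF L y lid_mult[OF L kL]] .
  ultimately have "y - b * k \<in> K" using s(1) by blast
  moreover have "b * k \<in> K" using lid_mult[OF K k(1)] .
  ultimately have "(y - b * k) + b * k \<in> K" using lid_add[OF K] by blast
  then show "y \<in> K" by simp
qed

end

context vm
begin

lemma RED: "v \<in> M \<Longrightarrow> v \<noteq> 0 \<Longrightarrow> \<forall>x\<in>ideal_prod G ms. act x v = 0 \<Longrightarrow>
  \<exists>p\<in>set ms. \<exists>w\<in>M. w \<noteq> 0 \<and> (\<forall>x\<in>p. act x w = 0)"
proof (induction ms arbitrary: v)
  case Nil
  then have "act 1 v = 0" using G1 by simp
  then show ?case using Nil V.act_one by simp
next
  case (Cons p ms)
  show ?case
  proof (cases "\<forall>x\<in>ideal_prod G ms. act x v = 0")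
    case True
    then show ?thesis using Cons.IH[OF Cons.prems(1,2)] by auto
  next
    case False
    then obtain y where y: "y \<in> ideal_prod G ms" "act y v \<noteq> 0" by blast
    have "\<forall>x\<in>p. act x (act y v) = 0"
    proof
      fix x assume "x \<in> p"
      then have "x * y \<in> ideal_prod G (p # ms)" using im_base y(1) by simp
      then have "act (x * y) v = 0" using Cons.prems(3) by blast
      then show "act x (act y v) = 0" using V.act_mult[OF Cons.prems(1)] by simp
    qed
    moreover have "act y v \<in> M" using V.Mact[OF Cons.prems(1)] .
    ultimately show ?thesis using y(2) by auto
  qed
qed

end

context pm
begin

lemma KEY: assumes s1: "simple_amod (M1 :: 'm::ab_group_add set) act1" and s2: "simple_amod (M2 :: 'm set) act2"
  and w1: "w1 \<in> M1" "w1 \<noteq> 0" "\<forall>x\<in>m. act1 x w1 = 0" and u1: "u1 \<in> vsub G M1 {0} act1 B" "u1 \<noteq> 0"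
  and w2: "w2 \<in> M2" "w2 \<noteq> 0" "\<forall>x\<in>m. act2 x w2 = 0" and u2: "u2 \<in> vsub G M2 {0} act2 B" "u2 \<noteq> 0"
  and L': "lid L'" and L: "lid L" and s: "L' \<subseteq> L" and bm: "Bmin L' L"
  and k1: "L' \<subseteq> {a. act1 a w1 = 0}" "\<not> L \<subseteq> {a. act1 a w1 = 0}"
  and k2: "L' \<subseteq> {a. act2 a w2 = 0}" "\<not> L \<subseteq> {a. act2 a w2 = 0}"
  shows "amod_iso M1 act1 M2 act2"
proof -
  interpret V1: vpm sc G R B M1 act1 m by unfold_locales (rule s1)
  interpret V2: vpm sc G R B M2 act2 m by unfold_locales (rule s2)
  let ?K1 = "{a. act1 a w1 = 0} \<inter> L"
  let ?K2 = "{a. act2 a w2 = 0} \<inter> L"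
  obtain x1 where x1: "x1 \<in> L" "act1 x1 w1 \<noteq> 0" using k1(2) by blast
  obtain x2 where x2: "x2 \<in> L" "act2 x2 w2 \<noteq> 0" using k2(2) by blast
  have A1: "?K1 \<inter> P.V B = L' \<inter> P.V B" using V1.a[OF w1(1,3) u1 L' L s k1(1) x1 bm] .
  have A2: "?K2 \<inter> P.V B = L' \<inter> P.V B" using V2.a[OF w2(1,3) u2 L' L s k2(1) x2 bm] .
  have lK1: "lid ?K1" using lid_int[OF V1.lid_Kw[OF w1(1,3)] L] .
  have lK2: "lid ?K2" using lid_int[OF V2.lid_Kw[OF w2(1,3)] L] .
  have mx1: "\<forall>K. lid K \<and> ?K1 \<subseteq> K \<and> K \<subseteq> L \<and> \<not> K \<subseteq> ?K1 \<longrightarrow> L \<subseteq> K"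
    using V1.b[OF w1(1,3) L] by blast
  have mx2: "\<forall>K. lid K \<and> ?K2 \<subseteq> K \<and> K \<subseteq> L \<and> \<not> K \<subseteq> ?K2 \<longrightarrow> L \<subseteq> K"
    using V2.b[OF w2(1,3) L] by blast
  obtain y1 where y1: "y1 \<in> L" "y1 \<in> P.V B" "act1 y1 w1 \<noteq> 0" using V1.a'[OF w1(1,3) u1 L x1] by blast
  obtain y2 where y2: "y2 \<in> L" "y2 \<in> P.V B" "act2 y2 w2 \<noteq> 0" using V2.a'[OF w2(1,3) u2 L x2] by blast
  have s1': "L' \<subseteq> ?K1" "?K1 \<subseteq> L" using s k1(1) by auto
  have s2': "L' \<subseteq> ?K2" "?K2 \<subseteq> L" using s k2(1) by auto
  have "?K2 \<subseteq> ?K1" using c_abs[OF L' L lK1 lK2 s1' s2' A1 A2 mx1 y1(1,2)] y1(3) by blast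
  moreover have "?K1 \<subseteq> ?K2" using c_abs[OF L' L lK2 lK1 s2' s1' A2 A1 mx2 y2(1,2)] y2(3) by blast
  ultimately have KK: "?K1 = ?K2" by blast
  have x12: "act2 x1 w2 \<noteq> 0" using KK x1 by blast
  let ?v1 = "act1 x1 w1" and ?v2 = "act2 x1 w2"
  have v1M: "?v1 \<in> M1" using V1.V.Mact[OF w1(1)] .
  have v2M: "?v2 \<in> M2" using V2.V.Mact[OF w2(1)] .
  have ann: "\<forall>a. act1 a ?v1 = 0 \<longleftrightarrow> act2 a ?v2 = 0"
  proof
    fix a
    have ax: "a * x1 \<in> L" using lid_mult[OF L x1(1)] .
    have "act1 a ?v1 = 0 \<longleftrightarrow> a * x1 \<in> ?K1" using ax V1.V.act_mult[OF w1(1)] by simp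
    also have "\<dots> \<longleftrightarrow> a * x1 \<in> ?K2" using KK by simp
    also have "\<dots> \<longleftrightarrow> act2 a ?v2 = 0" using ax V2.V.act_mult[OF w2(1)] by simp
    finally show "act1 a ?v1 = 0 \<longleftrightarrow> act2 a ?v2 = 0" .
  qed
  show ?thesis using iso[OF V1.am_V V2.am_V v1M v2M V1.gen[OF v1M x1(2)] V2.gen[OF v2M x12] ann] .
qed

end



context setting
begin

lemma partI: "\<exists>F :: ('m::ab_group_add set \<times> ('a \<Rightarrow> 'm \<Rightarrow> 'm)) set. finite F \<and>
            (\<forall>(M :: 'm set) act. simple_amod M act \<and> hc_block_mod sc G R M act \<and>
                B \<in> supp sc G R M {0} act \<longrightarrow>
                (\<exists>(M', act') \<in> F. amod_iso M act M' act'))"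
proof -
  obtain ms0 where ms0: "set ms0 = B" using finite_list[OF finB] by blast
  define m0 where "m0 = ideal_prod G ms0"
  have m0W: "m0 \<in> Wset G B" unfolding m0_def Wset_def using ms0 by blast
  interpret P0: pm sc G R B m0 by unfold_locales (rule m0W)
  have tsB: "\<And>I. I \<in> set ms0 \<Longrightarrow> tsideal G I" using ms0 Bcfs cfs_ts by blast
  obtain r c where c: "c 0 = Nm m0" "c r = UNIV" "\<forall>j\<le>r. P0.lid (c j)"
      "\<forall>j<r. c j \<subseteq> c (Suc j) \<and> P0.Bmin (c j) (c (Suc j))"
    using P0.CH[OF P0.lid_Nmm P0.lid_UNIV subset_UNIV] by blast
  define Q where "Q = {p :: ('m set \<times> ('a \<Rightarrow> 'm \<Rightarrow> 'm)). simple_amod (fst p) (snd p) \<and>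
      hc_block_mod sc G R (fst p) (snd p) \<and> B \<in> supp sc G R (fst p) {0} (snd p)}"
  define rel where "rel p w \<longleftrightarrow> w \<in> fst p \<and> w \<noteq> 0 \<and> (\<forall>x\<in>m0. snd p x w = 0)"
    for p :: "'m set \<times> ('a \<Rightarrow> 'm \<Rightarrow> 'm)" and w
  have ex_rel: "\<exists>w. rel p w" if p: "p \<in> Q" for p
  proof -
    have sp: "simple_amod (fst p) (snd p)" and su: "B \<in> supp sc G R (fst p) {0} (snd p)"
      using p unfolding Q_def by auto
    interpret V: vm sc G R B "fst p" "snd p" by unfold_locales (rule sp)
    obtain v where v: "v \<in> V.V.V B" "v \<noteq> 0" using su unfolding supp_def by blast
    obtain k where k: "k \<in> Wset G B" "\<forall>x\<in>k. snd p x v = 0" and vM: "v \<in> fst p"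
      using v(1) unfolding vsub_def by auto
    obtain ms where ms: "k = ideal_prod G ms" "set ms \<subseteq> B" using k(1) unfolding Wset_def by blast
    obtain q w where qw: "q \<in> set ms" "w \<in> fst p" "w \<noteq> 0" "\<forall>x\<in>q. snd p x w = 0"
      using V.RED[OF vM v(2)] k(2) ms(1) by blast
    have "q \<in> set ms0" using qw(1) ms(2) ms0 by blast
    then have "m0 \<subseteq> q" unfolding m0_def using prod_sub_factor tsB by blast
    then have "\<forall>x\<in>m0. snd p x w = 0" using qw(4) by blast
    then show ?thesis unfolding rel_def using qw(2,3) by blast
  qed
  define wsel where "wsel p = (SOME w. rel p w)" for p
  have wsel: "rel p (wsel p)" if "p \<in> Q" for p unfolding wsel_def using ex_rel[OF that] by (rule someI_ex)
  define idx where "idx p = (LEAST j. \<not> c j \<subseteq> {a. snd p a (wsel p) = 0})" for p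
  have idx: "idx p \<le> r \<and> idx p \<noteq> 0 \<and> \<not> c (idx p) \<subseteq> {a. snd p a (wsel p) = 0} \<and>
      c (idx p - 1) \<subseteq> {a. snd p a (wsel p) = 0}" if p: "p \<in> Q" for p
  proof -
    let ?K = "{a. snd p a (wsel p) = 0}"
    have sp: "simple_amod (fst p) (snd p)" using p unfolding Q_def by auto
    interpret V: vpm sc G R B "fst p" "snd p" m0 by unfold_locales (rule sp)
    have r: "rel p (wsel p)" using wsel[OF p] .
    have wM: "wsel p \<in> fst p" and wn: "wsel p \<noteq> 0" and wk: "\<forall>x\<in>m0. snd p x (wsel p) = 0"
      using r unfolding rel_def by auto
    have "snd p 1 (wsel p) \<noteq> 0" using V.V.act_one[OF wM] wn by simp
    then have nr: "\<not> c r \<subseteq> ?K" using c(2) by blast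
    then have le: "idx p \<le> r" unfolding idx_def by (rule Least_le)
    have ni: "\<not> c (idx p) \<subseteq> ?K" unfolding idx_def using nr by (rule LeastI)
    have c0: "c 0 \<subseteq> ?K" using c(1) V.phiN[OF wM wk] by blast
    then have nz: "idx p \<noteq> 0" using ni by auto
    have "c (idx p - 1) \<subseteq> ?K"
    proof (rule ccontr)
      assume "\<not> c (idx p - 1) \<subseteq> ?K"
      then have "idx p \<le> idx p - 1" unfolding idx_def by (rule Least_le)
      then show False using nz by simp
    qed
    then show ?thesis using le nz ni by blast
  qed
  define J where "J = {j. j \<le> r \<and> (\<exists>p\<in>Q. idx p = j)}"
  define rep where "rep j = (SOME p. p \<in> Q \<and> idx p = j)" for j
  define F where "F = rep ` J"
  have finF: "finite F" unfolding F_def J_def by simp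
  have main: "\<exists>(M', act') \<in> F. amod_iso M act M' act'" if pQ: "(M, act) \<in> Q" for M act
  proof -
    let ?p = "(M, act)"
    define j where "j = idx ?p"
    have jJ: "j \<in> J" unfolding J_def j_def using idx[OF pQ] pQ by blast
    have "\<exists>q. q \<in> Q \<and> idx q = j" using pQ j_def by blast
    then have q: "rep j \<in> Q" "idx (rep j) = j" unfolding rep_def by (metis (mono_tags, lifting) someI_ex)+
    let ?q = "rep j"
    have rF: "?q \<in> F" unfolding F_def using jJ by blast
    have s1: "simple_amod M act" using pQ unfolding Q_def by auto
    have s2: "simple_amod (fst ?q) (snd ?q)" using q(1) unfolding Q_def by auto
    have su1: "B \<in> supp sc G R M {0} act" using pQ unfolding Q_def by auto
    have su2: "B \<in> supp sc G R (fst ?q) {0} (snd ?q)" using q(1) unfolding Q_def by auto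
    obtain u1 where u1: "u1 \<in> vsub G M {0} act B" "u1 \<noteq> 0" using su1 unfolding supp_def by blast
    obtain u2 where u2: "u2 \<in> vsub G (fst ?q) {0} (snd ?q) B" "u2 \<noteq> 0" using su2 unfolding supp_def by blast
    have r1: "rel ?p (wsel ?p)" using wsel[OF pQ] .
    have r2: "rel ?q (wsel ?q)" using wsel[OF q(1)] .
    have i1: "j \<le> r" "j \<noteq> 0" "\<not> c j \<subseteq> {a. act a (wsel ?p) = 0}" "c (j - 1) \<subseteq> {a. act a (wsel ?p) = 0}"
      using idx[OF pQ] unfolding j_def by auto
    have i2: "\<not> c j \<subseteq> {a. snd ?q a (wsel ?q) = 0}" "c (j - 1) \<subseteq> {a. snd ?q a (wsel ?q) = 0}"
      using idx[OF q(1)] q(2) by auto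
    have jj: "j - 1 < r" "Suc (j - 1) = j" using i1(1,2) by auto
    have L': "P0.lid (c (j - 1))" using c(3) jj(1) by simp
    have L: "P0.lid (c j)" using c(3) i1(1) by simp
    have st: "c (j - 1) \<subseteq> c j" "P0.Bmin (c (j - 1)) (c j)" using c(4) jj by metis+
    have "amod_iso M act (fst ?q) (snd ?q)"
      using P0.KEY[OF s1 s2 _ _ _ u1 _ _ _ u2 L' L st i1(4) i1(3) i2(2) i2(1)] r1 r2 unfolding rel_def by auto
    then show ?thesis using rF by (intro bexI[of _ ?q]) auto
  qed
  show ?thesis
  proof (intro exI[of _ F] conjI allI impI)
    show "finite F" by (rule finF)
    fix M :: "'m set" and act
    assume "simple_amod M act \<and> hc_block_mod sc G R M act \<and> B \<in> supp sc G R M {0} act"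
    then have "(M, act) \<in> Q" unfolding Q_def by simp
    then show "\<exists>(M', act') \<in> F. amod_iso M act M' act'" by (rule main)
  qed
qed

lemma partII: "\<forall>(M :: 'm::ab_group_add set) act. simple_amod M act \<and> hc_block_mod sc G R M act \<longrightarrow>
                fin_dim sc act (vsub G M {0} act B)"
proof (intro allI impI)
  fix M :: "'m set" and act
  assume "simple_amod M act \<and> hc_block_mod sc G R M act"
  then have "simple_amod M act" by blast
  then interpret V: vm sc G R B M act by unfold_locales
  show "fin_dim sc act (vsub G M {0} act B)" using V.partii .
qed

end

theorem mainTheorem3:
  fixes sc :: "'k::field \<Rightarrow> 'a::ring_1 \<Rightarrow> 'a"
    and G :: "'a set"
    and R :: "('a set \<times> 'a set) set"
    and B :: "'a set set"
  assumes "k_algebra sc"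
    and "subalgebra sc G"
    and "equiv (cfs sc G) R"
    and "strong_HC_block_subalg sc G R"
    and "B \<in> cfs sc G // R"
    and "finite B"
    and "noetherian G"
    and "a_hat_fg_left G B"
    and "a_hat_fg_right G B"
  shows "(\<exists>F :: ('m::ab_group_add set \<times> ('a \<Rightarrow> 'm \<Rightarrow> 'm)) set. finite F \<and>
            (\<forall>(M :: 'm set) act. simple_amod M act \<and> hc_block_mod sc G R M act \<and>
                B \<in> supp sc G R M {0} act \<longrightarrow>
                (\<exists>(M', act') \<in> F. amod_iso M act M' act')))
       \<and> (\<forall>(M :: 'm set) act. simple_amod M act \<and> hc_block_mod sc G R M act \<longrightarrow>
                fin_dim sc act (vsub G M {0} act B))"
proof -
  interpret S: setting sc G R B
    by unfold_locales (use assms in auto)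
  show ?thesis using S.partI S.partII by blast
qed


end
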